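(* Let $g$ be a positive integer. Then there exists $c=c(g)>0$ such that for every integer $n\geq 3$ there exist a set of $n$ points and a set of $n$ open axis-parallel rectangles in $\mathbb{R}^2$ whose incidence graph $G$ has girth at least $g$ and at least $c\,n\log\log n$ edges.
   Context: An open axis-parallel rectangle is a set $(a,c)\times(b,d)\subset\mathbb{R}^2$. The incidence graph of a set $P$ of points and a set $\mathcal{R}$ of rectangles is the bipartite graph with vertex classes $P$ and $\mathcal{R}$, where $p\in P$ and $R\in\mathcal{R}$ are adjacent iff $p\in R$. The girth of a graph is the length of its shortest cycle. *)

theory Defs
  imports "HOL-Analysis.Analysis"
begin

definition open_rect :: "real \<Rightarrow> real \<Rightarrow> real \<Rightarrow> real \<Rightarrow> (real \<times> real) set" where
  "open_rect a b c d = {(x, y). a < x \<and> x < c \<and> b < y \<and> y < d}"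

definition is_open_rect :: "(real \<times> real) set \<Rightarrow> bool" where
  "is_open_rect S \<longleftrightarrow> (\<exists>a b c d. S = open_rect a b c d)"

definition incidence_adj ::
  "(real \<times> real) set \<Rightarrow> (real \<times> real) set set
   \<Rightarrow> ((real \<times> real) + (real \<times> real) set) \<Rightarrow> ((real \<times> real) + (real \<times> real) set) \<Rightarrow> bool" where
  "incidence_adj P R u v \<longleftrightarrow>
     (\<exists>p S. p \<in> P \<and> S \<in> R \<and> p \<in> S \<and> ((u = Inl p \<and> v = Inr S) \<or> (u = Inr S \<and> v = Inl p)))"

definition incidence_edges :: "(real \<times> real) set \<Rightarrow> (real \<times> real) set set \<Rightarrow> nat" where
  "incidence_edges P R = card {(p, S). p \<in> P \<and> S \<in> R \<and> p \<in> S}"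

definition has_cycle_of_length :: "('v \<Rightarrow> 'v \<Rightarrow> bool) \<Rightarrow> nat \<Rightarrow> bool" where
  "has_cycle_of_length E k \<longleftrightarrow>
     3 \<le> k \<and> (\<exists>vs. length vs = k \<and> distinct vs \<and> (\<forall>i<k. E (vs ! i) (vs ! ((i + 1) mod k))))"

text \<open>Girth at least g: every cycle has length at least g (acyclic graphs have infinite girth).\<close>
definition girth_at_least :: "('v \<Rightarrow> 'v \<Rightarrow> bool) \<Rightarrow> nat \<Rightarrow> bool" where
  "girth_at_least E g \<longleftrightarrow> (\<forall>k. has_cycle_of_length E k \<longrightarrow> g \<le> k)"

end

theory Submission
  imports Defs
begin

inductive walk :: "('v \<Rightarrow> 'v \<Rightarrow> bool) \<Rightarrow> 'v \<Rightarrow> 'v \<Rightarrow> nat \<Rightarrow> bool" for E where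
  walk0: "walk E u u 0"
| walkS: "E u w \<Longrightarrow> walk E w v n \<Longrightarrow> walk E u v (Suc n)"

lemma walk_snoc: "walk E u v n \<Longrightarrow> E v w \<Longrightarrow> walk E u w (Suc n)"
  by (induction rule: walk.induct) (auto intro: walk.intros)

lemma walk_rev: assumes "\<And>a b. E a b \<Longrightarrow> E b a" shows "walk E u v n \<Longrightarrow> walk E v u n"
  by (induction rule: walk.induct) (auto intro: walk.intros walk_snoc assms)

lemma walk_proj:
  assumes "\<And>a b. E a b \<Longrightarrow> \<phi> a = \<phi> b \<or> E' (\<phi> a) (\<phi> b)"
  shows "walk E u v n \<Longrightarrow> \<exists>n'\<le>n. walk E' (\<phi> u) (\<phi> v) n'"
proof (induction rule: walk.induct)
  case (walk0 u)
  then show ?case by (auto intro: walk.intros)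
next
  case (walkS u w v n)
  then obtain n' where n': "n' \<le> n" "walk E' (\<phi> w) (\<phi> v) n'" by auto
  from assms[OF walkS(1)] show ?case
  proof
    assume "\<phi> u = \<phi> w" then show ?thesis using n' by (intro exI[of _ n']) auto
  next
    assume "E' (\<phi> u) (\<phi> w)"
    then have "walk E' (\<phi> u) (\<phi> v) (Suc n')" using n' by (auto intro: walk.intros)
    then show ?thesis using n' by (intro exI[of _ "Suc n'"]) auto
  qed
qed

definition addE :: "('v \<Rightarrow> 'v \<Rightarrow> bool) \<Rightarrow> 'v \<Rightarrow> 'v \<Rightarrow> ('v \<Rightarrow> 'v \<Rightarrow> bool)" where
  "addE E u v = (\<lambda>a b. E a b \<or> (a = u \<and> b = v) \<or> (a = v \<and> b = u))"

definition withE :: "('v \<Rightarrow> 'v \<Rightarrow> bool) \<Rightarrow> ('v \<times> 'v) list \<Rightarrow> ('v \<Rightarrow> 'v \<Rightarrow> bool)" where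
  "withE E es = (\<lambda>a b. E a b \<or> (\<exists>(x,y)\<in>set es. (a = x \<and> b = y) \<or> (a = y \<and> b = x)))"

lemma withE_snoc: "withE E (es @ [(u,v)]) = addE (withE E es) u v"
  unfolding withE_def addE_def by (auto simp: fun_eq_iff)

lemma girth_mono_hom:
  assumes g: "girth_at_least E g"
    and hom: "\<And>u v. E' u v \<Longrightarrow> E (H u) (H v)"
    and inj: "inj_on H {u. \<exists>v. E' u v}"
  shows "girth_at_least E' g"
  unfolding girth_at_least_def
proof (intro allI impI)
  fix k assume "has_cycle_of_length E' k"
  then obtain vs where k3: "3 \<le> k" and len: "length vs = k" and dist: "distinct vs"
    and adj: "\<forall>i<k. E' (vs ! i) (vs ! ((i + 1) mod k))"
    unfolding has_cycle_of_length_def by auto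
  have sub: "set vs \<subseteq> {u. \<exists>v. E' u v}"
  proof
    fix x assume "x \<in> set vs"
    then obtain i where "i < k" "x = vs ! i" using len by (auto simp: in_set_conv_nth)
    then show "x \<in> {u. \<exists>v. E' u v}" using adj by auto
  qed
  have "distinct (map H vs)" using dist inj_on_subset[OF inj sub] by (simp add: distinct_map)
  moreover have "\<forall>i<k. E (map H vs ! i) (map H vs ! ((i + 1) mod k))"
    using adj hom len k3 by auto
  ultimately have "has_cycle_of_length E k" unfolding has_cycle_of_length_def using k3 len
    by (intro conjI exI[of _ "map H vs"]) auto
  then show "g \<le> k" using g unfolding girth_at_least_def by auto
qed

lemma girth_mono:
  assumes "girth_at_least E g" "\<And>u v. E' u v \<Longrightarrow> E u v"
  shows "girth_at_least E' g"
  using girth_mono_hom[of E g E' id] assms by auto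

lemma girth_le: "girth_at_least E g \<Longrightarrow> g' \<le> g \<Longrightarrow> girth_at_least E g'"
  unfolding girth_at_least_def by auto

lemma cyc_walk:
  assumes k3: "3 \<le> k" and len: "length vs = k" and dist: "distinct vs"
    and adj: "\<forall>i<k. addE E u v (vs ! i) (vs ! ((i + 1) mod k))"
    and i: "i < k" "\<not> E (vs ! i) (vs ! ((i + 1) mod k))"
  shows "\<forall>s<k. walk E (vs ! ((i + 1) mod k)) (vs ! ((i + 1 + s) mod k)) s"
proof (intro allI impI)
  fix s assume "s < k"
  then show "walk E (vs ! ((i + 1) mod k)) (vs ! ((i + 1 + s) mod k)) s"
  proof (induction s)
    case 0
    then show ?case by (auto intro: walk.intros)
  next
    case (Suc s)
    then have IH: "walk E (vs ! ((i + 1) mod k)) (vs ! ((i + 1 + s) mod k)) s" by auto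
    define i' where "i' = (i + 1 + s) mod k"
    have i'k: "i' < k" using k3 unfolding i'_def by auto
    have i'ne: "i' \<noteq> i"
    proof
      assume "i' = i"
      then have e: "(i + 1 + s) mod k = i" unfolding i'_def by auto
      show False
      proof (cases "i + 1 + s < k")
        case True then show False using e by simp
      next
        case False
        then have "(i + 1 + s) mod k = (i + 1 + s - k) mod k" by (simp add: le_mod_geq)
        also have "\<dots> = i + 1 + s - k" using Suc.prems i by (intro mod_less) linarith
        finally have "(i + 1 + s) mod k = i + 1 + s - k" .
        then show False using e Suc.prems False by linarith
      qed
    qed
    have nxt: "(i' + 1) mod k = (i + 1 + Suc s) mod k" unfolding i'_def by (simp add: mod_Suc_eq)
    have "E (vs ! i') (vs ! ((i' + 1) mod k))"
    proof (rule ccontr)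
      assume nE: "\<not> ?thesis"
      have e1: "addE E u v (vs ! i') (vs ! ((i' + 1) mod k))" using adj i'k by auto
      have e2: "addE E u v (vs ! i) (vs ! ((i + 1) mod k))" using adj i by auto
      have i1k: "(i + 1) mod k < k" "(i' + 1) mod k < k" using k3 by auto
      have inj: "\<And>a b. a < k \<Longrightarrow> b < k \<Longrightarrow> vs ! a = vs ! b \<Longrightarrow> a = b"
        using dist len nth_eq_iff_index_eq by metis
      have A: "(i' = i \<and> (i' + 1) mod k = (i + 1) mod k) \<or> (i' = (i + 1) mod k \<and> (i' + 1) mod k = i)"
        using e1 e2 nE i(2) inj[OF i'k i(1)] inj[OF i'k i1k(1)] inj[OF i1k(2) i(1)] inj[OF i1k(2) i1k(1)]
        unfolding addE_def by metis
      with i'ne have "i' = (i + 1) mod k" "(i' + 1) mod k = i" by auto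
      then have e: "(i + 2) mod k = i" using i by (simp add: mod_Suc_eq)
      show False
      proof (cases "i + 2 < k")
        case True then show False using e by simp
      next
        case False
        then have "(i + 2) mod k = (i + 2 - k) mod k" by (simp add: le_mod_geq)
        also have "\<dots> = i + 2 - k" using k3 i by (intro mod_less) linarith
        finally have "(i + 2) mod k = i + 2 - k" .
        then show False using e k3 i False by linarith
      qed
    qed
    then show ?case using walk_snoc[OF IH] nxt unfolding i'_def by auto
  qed
qed

lemma girth_addE:
  assumes g: "girth_at_least E g" and sym: "\<And>a b. E a b \<Longrightarrow> E b a"
    and far: "\<And>l. walk E u v l \<Longrightarrow> g \<le> l + 1"
  shows "girth_at_least (addE E u v) g"
  unfolding girth_at_least_def
proof (intro allI impI)
  fix k assume "has_cycle_of_length (addE E u v) k"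
  then obtain vs where k3: "3 \<le> k" and len: "length vs = k" and dist: "distinct vs"
    and adj: "\<forall>i<k. addE E u v (vs ! i) (vs ! ((i + 1) mod k))"
    unfolding has_cycle_of_length_def by auto
  show "g \<le> k"
  proof (cases "\<forall>i<k. E (vs ! i) (vs ! ((i + 1) mod k))")
    case True
    then have "has_cycle_of_length E k" unfolding has_cycle_of_length_def using k3 len dist by auto
    then show ?thesis using g unfolding girth_at_least_def by auto
  next
    case False
    then obtain i where i: "i < k" "\<not> E (vs ! i) (vs ! ((i + 1) mod k))" by auto
    have w: "walk E (vs ! ((i + 1) mod k)) (vs ! ((i + 1 + (k - 1)) mod k)) (k - 1)"
      using spec[OF cyc_walk[OF k3 len dist adj i], of "k - 1"] k3 by linarith
    have "i + 1 + (k - 1) = i + k" using k3 by simp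
    then have "(i + 1 + (k - 1)) mod k = i" using i by simp
    with w have w': "walk E (vs ! ((i + 1) mod k)) (vs ! i) (k - 1)" by simp
    have "(vs ! i = u \<and> vs ! ((i + 1) mod k) = v) \<or> (vs ! i = v \<and> vs ! ((i + 1) mod k) = u)"
      using adj i unfolding addE_def by auto
    then have "walk E u v (k - 1)" using w' walk_rev[OF sym] by auto
    then show ?thesis using far k3 by fastforce
  qed
qed

lemma girth_withE:
  assumes g: "girth_at_least E g" and sym: "\<And>a b. E a b \<Longrightarrow> E b a"
    and far: "\<And>i l. i < length es \<Longrightarrow> walk (withE E (take i es)) (fst (es ! i)) (snd (es ! i)) l \<Longrightarrow> g \<le> l + 1"
  shows "girth_at_least (withE E es) g"
  using far
proof (induction es rule: rev_induct)
  case Nil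
  then show ?case using g unfolding withE_def by simp
next
  case (snoc x es)
  obtain u v where x: "x = (u,v)" by (cases x)
  have IH: "girth_at_least (withE E es) g"
  proof (rule snoc.IH)
    fix i l assume il: "i < length es" "walk (withE E (take i es)) (fst (es ! i)) (snd (es ! i)) l"
    have "take i (es @ [x]) = take i es" "(es @ [x]) ! i = es ! i" using il(1) by (auto simp: nth_append)
    then show "g \<le> l + 1" using snoc.prems[of i l] il by auto
  qed
  have sym': "\<And>a b. withE E es a b \<Longrightarrow> withE E es b a" using sym unfolding withE_def by auto
  have far': "\<And>l. walk (withE E es) u v l \<Longrightarrow> g \<le> l + 1"
    using snoc.prems[of "length es"] x by auto
  show ?case unfolding x withE_snoc by (rule girth_addE[OF IH sym' far'])
qed

definition copyG :: "('v \<Rightarrow> 'v \<Rightarrow> bool) \<Rightarrow> (nat \<times> 'v) + 'b \<Rightarrow> (nat \<times> 'v) + 'b \<Rightarrow> bool" where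
  "copyG E a b = (\<exists>j u v. a = Inl (j, u) \<and> b = Inl (j, v) \<and> E u v)"

lemma girth_copyG:
  fixes E :: "'v \<Rightarrow> 'v \<Rightarrow> bool"
  assumes g: "girth_at_least E g"
  shows "girth_at_least (copyG E :: (nat \<times> 'v) + 'b \<Rightarrow> _) g"
  unfolding girth_at_least_def
proof (intro allI impI)
  fix k assume "has_cycle_of_length (copyG E :: (nat \<times> 'v) + 'b \<Rightarrow> _) k"
  then obtain vs where k3: "3 \<le> k" and len: "length vs = k" and dist: "distinct vs"
    and adj: "\<forall>i<k. (copyG E :: (nat \<times> 'v) + 'b \<Rightarrow> _) (vs ! i) (vs ! ((i + 1) mod k))"
    unfolding has_cycle_of_length_def by auto
  obtain j0 u0 where v0: "vs ! 0 = Inl (j0, u0)"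
    using adj[rule_format, of 0] k3 unfolding copyG_def by auto
  have all: "\<forall>i<k. \<exists>u. vs ! i = Inl (j0, u)"
  proof (intro allI impI)
    fix i assume "i < k"
    then show "\<exists>u. vs ! i = Inl (j0, u)"
    proof (induction i)
      case 0 then show ?case using v0 by auto
    next
      case (Suc i)
      then obtain u where u: "vs ! i = Inl (j0, u)" by auto
      have "(i + 1) mod k = Suc i" using Suc.prems by simp
      then have "copyG E (vs ! i) (vs ! Suc i)" using adj Suc.prems by (metis Suc_lessD)
      then show ?case using u unfolding copyG_def by auto
    qed
  qed
  define H where "H = (\<lambda>x::(nat \<times> 'v) + 'b. case x of Inl p \<Rightarrow> snd p | Inr _ \<Rightarrow> undefined)"
  have Hinj: "inj_on H (set vs)"
  proof (rule inj_onI)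
    fix x y assume "x \<in> set vs" "y \<in> set vs" "H x = H y"
    then obtain i i' where "i < k" "i' < k" "x = vs ! i" "y = vs ! i'" using len by (auto simp: in_set_conv_nth)
    moreover obtain u u' where "vs ! i = Inl (j0, u)" "vs ! i' = Inl (j0, u')" using all \<open>i < k\<close> \<open>i' < k\<close> by blast
    ultimately show "x = y" using \<open>H x = H y\<close> unfolding H_def by simp
  qed
  have "distinct (map H vs)" using dist Hinj by (simp add: distinct_map)
  moreover have "\<forall>i<k. E (map H vs ! i) (map H vs ! ((i + 1) mod k))"
  proof (intro allI impI)
    fix i assume i: "i < k"
    have "(i + 1) mod k < k" using k3 by auto
    then show "E (map H vs ! i) (map H vs ! ((i + 1) mod k))"
      using adj i len unfolding copyG_def H_def by force
  qed
  ultimately have "has_cycle_of_length E k" unfolding has_cycle_of_length_def using k3 len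
    by (intro conjI exI[of _ "map H vs"]) auto
  then show "g \<le> k" using g unfolding girth_at_least_def by auto
qed

lemma ball_card:
  assumes deg: "\<forall>v. finite {w. E v w} \<and> card {w. E v w} \<le> D"
  shows "finite {v. walk E u v l} \<and> card {v. walk E u v l} \<le> D ^ l"
proof (induction l arbitrary: u)
  case 0
  have "{v. walk E u v 0} = {u}" by (auto intro: walk.intros elim: walk.cases)
  then show ?case by simp
next
  case (Suc l)
  have eq: "{v. walk E u v (Suc l)} = (\<Union>w\<in>{w. E u w}. {v. walk E w v l})"
    by (auto intro: walk.intros elim: walk.cases)
  have fin: "finite {w. E u w}" using deg by blast
  have "card (\<Union>w\<in>{w. E u w}. {v. walk E w v l}) \<le> (\<Sum>w\<in>{w. E u w}. card {v. walk E w v l})"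
    by (rule card_UN_le[OF fin])
  also have "\<dots> \<le> (\<Sum>w\<in>{w. E u w}. D ^ l)" using Suc.IH by (intro sum_mono) auto
  also have "\<dots> = card {w. E u w} * D ^ l" by simp
  also have "\<dots> \<le> D * D ^ l" using deg by (intro mult_right_mono) blast+
  finally show ?case using eq fin Suc.IH by auto
qed

lemma near_card:
  assumes deg: "\<forall>v. finite {w. E v w} \<and> card {w. E v w} \<le> D" and D1: "1 \<le> D"
  shows "finite {v. \<exists>l<G. walk E u v l} \<and> card {v. \<exists>l<G. walk E u v l} \<le> G * D ^ G"
proof -
  have eq: "{v. \<exists>l<G. walk E u v l} = (\<Union>l\<in>{..<G}. {v. walk E u v l})" by auto
  have "card (\<Union>l\<in>{..<G}. {v. walk E u v l}) \<le> (\<Sum>l\<in>{..<G}. card {v. walk E u v l})"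
    by (rule card_UN_le) auto
  also have "\<dots> \<le> (\<Sum>l\<in>{..<G}. D ^ G)"
  proof (intro sum_mono)
    fix l assume "l \<in> {..<G}"
    then have "D ^ l \<le> D ^ G" using D1 by (intro power_increasing) auto
    then show "card {v. walk E u v l} \<le> D ^ G" using ball_card[OF deg, where u=u and l=l] by linarith
  qed
  also have "\<dots> = G * D ^ G" by simp
  finally show ?thesis using eq ball_card[OF deg] by auto
qed

definition Bg :: "(nat \<times> nat) list \<Rightarrow> nat + nat \<Rightarrow> nat + nat \<Rightarrow> bool" where
  "Bg es = withE (\<lambda>_ _. False) (map (\<lambda>(j,b). (Inl j, Inr b)) es)"

lemma Bg_iff: "Bg es x y \<longleftrightarrow> (\<exists>j b. (j,b) \<in> set es \<and> ((x = Inl j \<and> y = Inr b) \<or> (x = Inr b \<and> y = Inl j)))"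
  unfolding Bg_def withE_def by (auto; force)

lemma Bg_nbrs:
  "{w. Bg es (Inl j) w} = Inr ` {b. (j,b) \<in> set es}"
  "{w. Bg es (Inr b) w} = Inl ` {j. (j,b) \<in> set es}"
  unfolding Bg_iff by auto

lemma fin_row: "finite {b. (j,b) \<in> set es}"
proof -
  have "{b. (j,b) \<in> set es} \<subseteq> snd ` set es" by force
  then show ?thesis by (rule finite_subset) auto
qed

lemma fin_col: "finite {j. (j,b) \<in> set es}"
proof -
  have "{j. (j,b) \<in> set es} \<subseteq> fst ` set es" by force
  then show ?thesis by (rule finite_subset) auto
qed

lemma card_rows: fixes es :: "(nat \<times> nat) list" shows "set es \<subseteq> {..<N} \<times> UNIV \<Longrightarrow> card (set es) = (\<Sum>j<N. card {b. (j,b) \<in> set es})"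
proof -
  assume "set es \<subseteq> {..<N} \<times> UNIV"
  then have "set es = Sigma {..<N} (\<lambda>j. {b. (j,b) \<in> set es})" by auto
  then have "card (set es) = card (Sigma {..<N} (\<lambda>j. {b. (j,b) \<in> set es}))" by simp
  also have "\<dots> = (\<Sum>j<N. card {b. (j,b) \<in> set es})" by (rule card_SigmaI) (auto simp: fin_row)
  finally show ?thesis .
qed

lemma card_cols: fixes es :: "(nat \<times> nat) list" shows "set es \<subseteq> UNIV \<times> {..<M} \<Longrightarrow> card (set es) = (\<Sum>b<M. card {j. (j,b) \<in> set es})"
proof -
  assume a: "set es \<subseteq> UNIV \<times> {..<M}"
  have "card (set es) = card ((\<lambda>(x,y). (y,x)) ` set es)" by (rule card_image[symmetric]) (auto simp: inj_on_def)
  also have "(\<lambda>(x,y). (y,x)) ` set es = Sigma {..<M} (\<lambda>b. {j. (j,b) \<in> set es})" using a by force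
  also have "card \<dots> = (\<Sum>b<M. card {j. (j,b) \<in> set es})" by (rule card_SigmaI) (auto simp: fin_col)
  finally show ?thesis .
qed

definition greedy_inv :: "nat \<Rightarrow> nat \<Rightarrow> nat \<Rightarrow> nat \<Rightarrow> nat \<Rightarrow> (nat \<times> nat) list \<Rightarrow> bool" where
  "greedy_inv N M m k G es \<longleftrightarrow> distinct es \<and> set es \<subseteq> {..<N} \<times> {..<M} \<and>
     (\<forall>j. card {b. (j,b) \<in> set es} \<le> m) \<and> (\<forall>b. card {j. (j,b) \<in> set es} \<le> k) \<and>
     (\<forall>i<length es. \<forall>l. walk (Bg (take i es)) (Inl (fst (es ! i))) (Inr (snd (es ! i))) l \<longrightarrow> G \<le> l)"

lemma greedy_step:
  assumes inv: "greedy_inv N M m k G es" and t: "length es < N * m"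
    and k1: "1 \<le> k" and G2: "2 \<le> G" and cond: "N * m + k * (G * (m + k) ^ G) < k * M"
  shows "\<exists>es'. greedy_inv N M m k G es' \<and> length es' = Suc (length es)"
proof -
  from inv have dist: "distinct es" and sub: "set es \<subseteq> {..<N} \<times> {..<M}"
    and rowm: "\<forall>j. card {b. (j,b) \<in> set es} \<le> m" and colk: "\<forall>b. card {j. (j,b) \<in> set es} \<le> k"
    and far: "\<forall>i<length es. \<forall>l. walk (Bg (take i es)) (Inl (fst (es ! i))) (Inr (snd (es ! i))) l \<longrightarrow> G \<le> l"
    unfolding greedy_inv_def by auto
  have lencard: "length es = card (set es)" using dist by (simp add: distinct_card)
  have rows: "card (set es) = (\<Sum>j<N. card {b. (j,b) \<in> set es})" using sub by (intro card_rows) auto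
  have cols: "card (set es) = (\<Sum>b<M. card {j. (j,b) \<in> set es})" using sub by (intro card_cols) auto
  have "\<exists>j<N. card {b. (j,b) \<in> set es} < m"
  proof (rule ccontr)
    assume nt: "\<not> ?thesis"
    have "\<forall>j<N. card {b. (j,b) \<in> set es} = m"
    proof (intro allI impI)
      fix j assume "j < N"
      then have "\<not> card {b. (j,b) \<in> set es} < m" using nt by blast
      then show "card {b. (j,b) \<in> set es} = m" using rowm[rule_format, of j] by linarith
    qed
    then have "card (set es) = N * m" using rows by simp
    then show False using t lencard by simp
  qed
  then obtain j where j: "j < N" "card {b. (j,b) \<in> set es} < m" by blast
  define D where "D = m + k"
  have D1: "1 \<le> D" unfolding D_def using k1 by simp
  define F where "F = {b\<in>{..<M}. card {j. (j,b) \<in> set es} = k}"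
  define Nr where "Nr = {b\<in>{..<M}. \<exists>l<G. walk (Bg es) (Inl j) (Inr b) l}"
  have "k * card F = (\<Sum>b\<in>F. card {j. (j,b) \<in> set es})" unfolding F_def by simp
  also have "\<dots> \<le> (\<Sum>b<M. card {j. (j,b) \<in> set es})" unfolding F_def by (intro sum_mono2) auto
  finally have kF: "k * card F \<le> length es" using cols lencard by simp
  have deg: "\<forall>v. finite {w. Bg es v w} \<and> card {w. Bg es v w} \<le> D"
  proof
    fix v show "finite {w. Bg es v w} \<and> card {w. Bg es v w} \<le> D"
    proof (cases v)
      case (Inl j')
      have "card (Inr ` {b. (j',b) \<in> set es}) = card {b. (j',b) \<in> set es}"
        by (rule card_image) (auto simp: inj_on_def)
      then have "card (Inr ` {b. (j',b) \<in> set es}) \<le> D" using rowm[rule_format, of j'] unfolding D_def by (metis trans_le_add1)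
      then show ?thesis using Inl by (simp add: Bg_nbrs fin_row)
    next
      case (Inr b')
      have "card (Inl ` {j. (j,b') \<in> set es}) = card {j. (j,b') \<in> set es}"
        by (rule card_image) (auto simp: inj_on_def)
      then have "card (Inl ` {j. (j,b') \<in> set es}) \<le> D" using colk[rule_format, of b'] unfolding D_def by (metis trans_le_add2)
      then show ?thesis using Inr by (simp add: Bg_nbrs fin_col)
    qed
  qed
  have nc: "finite {v. \<exists>l<G. walk (Bg es) (Inl j) v l} \<and> card {v. \<exists>l<G. walk (Bg es) (Inl j) v l} \<le> G * D ^ G"
    by (rule near_card[OF deg D1])
  have "(Inr ` Nr :: (nat + nat) set) \<subseteq> {v. \<exists>l<G. walk (Bg es) (Inl j) v l}" unfolding Nr_def by auto
  then have "card ((Inr ` Nr :: (nat + nat) set)) \<le> card {v. \<exists>l<G. walk (Bg es) (Inl j) v l}" using nc by (intro card_mono) auto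
  then have "card ((Inr ` Nr :: (nat + nat) set)) \<le> G * D ^ G" using nc by linarith
  then have cNr: "card Nr \<le> G * D ^ G" by (subst (asm) card_image) (auto simp: inj_on_def)
  have "k * card Nr \<le> k * (G * D ^ G)" using cNr by (rule mult_left_mono) simp
  then have "k * (card F + card Nr) \<le> length es + k * (G * D ^ G)"
    unfolding add_mult_distrib2 using kF by linarith
  also have "\<dots> < k * M" using t cond unfolding D_def by linarith
  finally have "card F + card Nr < M" by simp
  then have "card (F \<union> Nr) < card {..<M}" using card_Un_le[of F Nr] by simp
  have "\<not> {..<M} \<subseteq> F \<union> Nr"
  proof
    assume "{..<M} \<subseteq> F \<union> Nr"
    moreover have "finite (F \<union> Nr)" unfolding F_def Nr_def by auto
    ultimately have "card {..<M} \<le> card (F \<union> Nr)" by (rule card_mono[rotated])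
    then show False using \<open>card (F \<union> Nr) < card {..<M}\<close> by simp
  qed
  then obtain b where b: "b < M" "b \<notin> F" "b \<notin> Nr" by auto
  have notin: "(j,b) \<notin> set es"
  proof
    assume "(j,b) \<in> set es"
    then have "Bg es (Inl j) (Inr b)" by (auto simp: Bg_iff)
    then have "walk (Bg es) (Inl j) (Inr b) 1" by (auto intro: walk.intros)
    then show False using b G2 unfolding Nr_def by auto
  qed
  define es' where "es' = es @ [(j,b)]"
  have "greedy_inv N M m k G es'"
    unfolding greedy_inv_def
  proof (intro conjI allI impI)
    show "distinct es'" using dist notin unfolding es'_def by simp
    show "set es' \<subseteq> {..<N} \<times> {..<M}" using sub j b unfolding es'_def by auto
  next
    fix j' show "card {b'. (j',b') \<in> set es'} \<le> m"
    proof (cases "j' = j")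
      case True
      have "{b'. (j',b') \<in> set es'} = insert b {b'. (j,b') \<in> set es}" using True unfolding es'_def by auto
      then show ?thesis using j card_insert_le fin_row by (simp add: fin_row card_insert_if)
    next
      case False
      have "{b'. (j',b') \<in> set es'} = {b'. (j',b') \<in> set es}" using False unfolding es'_def by auto
      then show ?thesis using rowm by simp
    qed
  next
    fix b' show "card {j'. (j',b') \<in> set es'} \<le> k"
    proof (cases "b' = b")
      case True
      have "{j'. (j',b') \<in> set es'} = insert j {j'. (j',b) \<in> set es}" using True unfolding es'_def by auto
      have "card {j'. (j',b) \<in> set es} \<noteq> k" using b unfolding F_def by auto
      then have "card {j'. (j',b) \<in> set es} < k" using colk[rule_format, of b] by linarith
      then show ?thesis using \<open>{j'. (j',b') \<in> set es'} = insert j {j'. (j',b) \<in> set es}\<close>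
        by (simp add: fin_col card_insert_if)
    next
      case False
      have "{j'. (j',b') \<in> set es'} = {j'. (j',b') \<in> set es}" using False unfolding es'_def by auto
      then show ?thesis using colk by simp
    qed
  next
    fix i l assume i: "i < length es'" and w: "walk (Bg (take i es')) (Inl (fst (es' ! i))) (Inr (snd (es' ! i))) l"
    show "G \<le> l"
    proof (cases "i < length es")
      case True
      then have "take i es' = take i es" "es' ! i = es ! i" unfolding es'_def by (auto simp: nth_append)
      then show ?thesis using far True w by auto
    next
      case False
      then have "i = length es" using i unfolding es'_def by simp
      then have "take i es' = es" "es' ! i = (j,b)" unfolding es'_def by auto
      then have "walk (Bg es) (Inl j) (Inr b) l" using w by simp
      show ?thesis
      proof (rule ccontr)
        assume "\<not> G \<le> l"
        then have "b \<in> Nr" using b \<open>walk (Bg es) (Inl j) (Inr b) l\<close> unfolding Nr_def by (auto simp: not_le)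
        then show False using b by simp
      qed
    qed
  qed
  then show ?thesis unfolding es'_def by (intro exI[of _ "es @ [(j,b)]"]) auto
qed

lemma greedy:
  assumes k1: "1 \<le> k" and G2: "2 \<le> G" and cond: "N * m + k * (G * (m + k) ^ G) < k * M"
  shows "\<exists>es. distinct es \<and> set es \<subseteq> {..<N} \<times> {..<M} \<and> (\<forall>j<N. card {b. (j,b) \<in> set es} = m) \<and>
     (\<forall>i<length es. \<forall>l. walk (Bg (take i es)) (Inl (fst (es ! i))) (Inr (snd (es ! i))) l \<longrightarrow> G \<le> l)"
proof -
  have "\<forall>t\<le>N * m. \<exists>es. greedy_inv N M m k G es \<and> length es = t"
  proof (intro allI impI)
    fix t assume "t \<le> N * m"
    then show "\<exists>es. greedy_inv N M m k G es \<and> length es = t"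
    proof (induction t)
      case 0
      have "greedy_inv N M m k G []" unfolding greedy_inv_def by simp
      then show ?case by auto
    next
      case (Suc t)
      then obtain es where "greedy_inv N M m k G es" "length es = t" by auto
      then show ?case using greedy_step[OF _ _ k1 G2 cond] Suc.prems by auto
    qed
  qed
  then obtain es where inv: "greedy_inv N M m k G es" and len: "length es = N * m" by auto
  from inv have dist: "distinct es" and sub: "set es \<subseteq> {..<N} \<times> {..<M}"
    and rowm: "\<forall>j. card {b. (j,b) \<in> set es} \<le> m"
    unfolding greedy_inv_def by auto
  have rows: "card (set es) = (\<Sum>j<N. card {b. (j,b) \<in> set es})" using sub by (intro card_rows) auto
  have full: "\<forall>j<N. card {b. (j,b) \<in> set es} = m"
  proof (rule ccontr)
    assume "\<not> ?thesis"
    then obtain j0 where j0: "j0 < N" "card {b. (j0,b) \<in> set es} < m" using rowm le_neq_implies_less by blast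
    have "(\<Sum>j<N. card {b. (j,b) \<in> set es}) < (\<Sum>j<N. m)"
      by (rule sum_strict_mono_ex1) (use rowm j0 in auto)
    then have "card (set es) < N * m" using rows by simp
    then show False using dist len by (simp add: distinct_card)
  qed
  show ?thesis using inv full unfolding greedy_inv_def by auto
qed

lemma mono_extend:
  fixes X :: "real set"
  assumes "finite X"
  shows "\<forall>h::real \<Rightarrow> real. (\<forall>x\<in>X. \<forall>y\<in>X. x < y \<longrightarrow> h x < h y) \<longrightarrow>
           (\<exists>f. (\<forall>x y. x < y \<longrightarrow> f x < f y) \<and> (\<forall>x\<in>X. f x = h x))"
  using assms
proof (induction X rule: finite_linorder_max_induct)
  case empty
  {
    fix h :: "real \<Rightarrow> real"
    have "\<exists>f. (\<forall>x y. x < y \<longrightarrow> f x < f y) \<and> (\<forall>x\<in>{}. f x = h x)"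
      by (rule exI[where x = "\<lambda>z::real. z"]) simp
  }
  then show ?case by simp
next
  case (insert b X)
  show ?case
  proof (intro allI impI)
    fix h :: "real \<Rightarrow> real"
    assume hm: "\<forall>x\<in>insert b X. \<forall>y\<in>insert b X. x < y \<longrightarrow> h x < h y"
    show "\<exists>f. (\<forall>x y. x < y \<longrightarrow> f x < f y) \<and> (\<forall>x\<in>insert b X. f x = h x)"
    proof (cases "X = {}")
      case True
      then show ?thesis by (intro exI[of _ "\<lambda>z. z - b + h b"]) auto
    next
      case False
      have hmX: "\<forall>x\<in>X. \<forall>y\<in>X. x < y \<longrightarrow> h x < h y" using hm by blast
      obtain f0 where f0m: "\<forall>x y. x < y \<longrightarrow> f0 x < f0 y" and f0h: "\<forall>x\<in>X. f0 x = h x"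
        using insert.IH hmX by blast
      define a where "a = Max X"
      have aX: "a \<in> X" unfolding a_def using False insert.hyps(1) by simp
      have ab: "a < b" using insert.hyps(2) aX by auto
      have hab: "h a < h b" using hm aX ab by auto
      have leA: "\<forall>x\<in>X. x \<le> a" unfolding a_def using insert.hyps(1) by simp
      define s where "s = (h b - h a) / (b - a)"
      have s0: "s > 0" unfolding s_def using ab hab by simp
      define f where "f = (\<lambda>z. if z \<le> a then f0 z else if z \<le> b then h a + (z - a) * s else h b + (z - b))"
      have fb: "f b = h b" unfolding f_def s_def using ab by auto
      have f0a: "f0 a = h a" using f0h aX by simp
      have f0le: "\<And>z. z \<le> a \<Longrightarrow> f0 z \<le> h a"
      proof -
        fix z assume "z \<le> a"
        then show "f0 z \<le> h a"
        proof (cases "z = a")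
          case True then show ?thesis using f0a by simp
        next
          case False then have "z < a" using \<open>z \<le> a\<close> by simp
          then show ?thesis using f0m f0a by (metis less_imp_le)
        qed
      qed
      have mono: "\<forall>x y. x < y \<longrightarrow> f x < f y"
      proof (intro allI impI)
        fix x y :: real assume xy: "x < y"
        have L: "\<And>z. a < z \<Longrightarrow> h a < h a + (z - a) * s" using s0 by simp
        have Lb: "\<And>z. z \<le> b \<Longrightarrow> h a + (z - a) * s \<le> h b"
        proof -
          fix z assume "z \<le> b"
          then have "(z - a) * s \<le> (b - a) * s" using s0 by (intro mult_right_mono) auto
          also have "(b - a) * s = h b - h a" unfolding s_def using ab by simp
          finally show "h a + (z - a) * s \<le> h b" by simp
        qed
        show "f x < f y"
        proof (cases "y \<le> a")
          case True then show ?thesis using xy f0m unfolding f_def by auto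
        next
          case ya: False
          show ?thesis
          proof (cases "y \<le> b")
            case yb: True
            have fy: "f y = h a + (y - a) * s" unfolding f_def using ya yb by simp
            show ?thesis
            proof (cases "x \<le> a")
              case True
              then have "f x = f0 x" unfolding f_def by simp
              moreover have "f0 x \<le> h a" using f0le True by simp
              moreover have "h a < h a + (y - a) * s" using L ya by simp
              ultimately show ?thesis using fy by linarith
            next
              case False
              then have "f x = h a + (x - a) * s" unfolding f_def using xy yb by simp
              then show ?thesis using fy xy s0 by simp
            qed
          next
            case yb: False
            have fy: "f y = h b + (y - b)" unfolding f_def using ya yb by simp
            show ?thesis
            proof (cases "x \<le> a")
              case True
              then have "f x = f0 x" "f0 x \<le> h a" using f0le unfolding f_def by auto
              then show ?thesis using fy hab yb by linarith
            next
              case xa: False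
              show ?thesis
              proof (cases "x \<le> b")
                case True
                then have "f x = h a + (x - a) * s" "h a + (x - a) * s \<le> h b" using Lb xa unfolding f_def by auto
                then show ?thesis using fy yb by linarith
              next
                case False then show ?thesis using fy xy unfolding f_def using xa by simp
              qed
            qed
          qed
        qed
      qed
      have agree: "\<forall>x\<in>insert b X. f x = h x"
      proof
        fix x assume "x \<in> insert b X"
        then show "f x = h x"
        proof
          assume "x = b" then show ?thesis using fb by simp
        next
          assume "x \<in> X"
          then have "x \<le> a" "f0 x = h x" using leA f0h by auto
          then show ?thesis unfolding f_def by simp
        qed
      qed
      show ?thesis using mono agree by blast
    qed
  qed
qed

definition sig :: "real \<Rightarrow> real" where "sig y = arctan y / pi + 1 / 2"

lemma sig_less_iff: "sig x < sig y \<longleftrightarrow> x < y"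
  unfolding sig_def by (simp add: divide_less_cancel arctan_less_iff)

lemma sig_bounds: "0 < sig y" "sig y < 1"
proof -
  have "- (pi / 2) < arctan y" "arctan y < pi / 2" using arctan_bounded by auto
  then show "0 < sig y" "sig y < 1" unfolding sig_def by (auto simp: field_simps)
qed

definition rpar :: "(real \<times> real) set \<Rightarrow> real \<times> real \<times> real \<times> real" where
  "rpar S = (SOME q. S = (case q of (a, b, c, d) \<Rightarrow> open_rect a b c d))"

lemma rpar: "is_open_rect S \<Longrightarrow> S = (case rpar S of (a, b, c, d) \<Rightarrow> open_rect a b c d)"
  unfolding rpar_def is_open_rect_def
  by (rule someI_ex) auto

lemma open_rect_mem: "(x, y) \<in> open_rect a b c d \<longleftrightarrow> a < x \<and> x < c \<and> b < y \<and> y < d"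
  unfolding open_rect_def by auto

lemma nat_eq_from_strip:
  fixes j j' :: nat and u v :: real
  assumes "0 < u" "u < 1" "0 < v" "v < 1" "u + 2 * real j < v + 2 * real j' + 1" "v + 2 * real j' < u + 2 * real j + 1"
  shows "j = j'"
proof -
  have "real j < real j' + 1" "real j' < real j + 1" using assms by linarith+
  then show ?thesis by linarith
qed

definition idx :: "(real \<times> real) set \<Rightarrow> real \<times> real \<Rightarrow> nat" where
  "idx P p = card {x \<in> fst ` P. x < fst p}"

definition Lj :: "(nat \<times> nat) list \<Rightarrow> nat \<Rightarrow> nat list" where
  "Lj es j = sorted_list_of_set {b. (j,b) \<in> set es}"

definition asg :: "(real \<times> real) set \<Rightarrow> (nat \<times> nat) list \<Rightarrow> nat \<Rightarrow> real \<times> real \<Rightarrow> nat" where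
  "asg P es j p = Lj es j ! idx P p"

lemma idx_less:
  assumes "finite P" "p \<in> P" shows "idx P p < card P"
proof -
  have "{x \<in> fst ` P. x < fst p} \<subset> fst ` P" using assms by auto
  then have "idx P p < card (fst ` P)" unfolding idx_def using assms by (intro psubset_card_mono) auto
  also have "\<dots> \<le> card P" using assms by (intro card_image_le) auto
  finally show ?thesis .
qed

lemma idx_mono:
  assumes "finite P" "p \<in> P" "q \<in> P" "fst p < fst q" shows "idx P p < idx P q"
proof -
  have "{x \<in> fst ` P. x < fst p} \<subset> {x \<in> fst ` P. x < fst q}" using assms by force
  then show ?thesis unfolding idx_def using assms by (intro psubset_card_mono) auto
qed

lemma Lj_props:
  assumes "card {b. (j,b) \<in> set es} = m"
  shows "length (Lj es j) = m" "set (Lj es j) = {b. (j,b) \<in> set es}" "sorted_wrt (<) (Lj es j)"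
  unfolding Lj_def using assms fin_row[of j es]
  by (auto simp: strict_sorted_list_of_set)

lemma asg_in:
  assumes "finite P" "card P = m" "card {b. (j,b) \<in> set es} = m" "p \<in> P"
  shows "(j, asg P es j p) \<in> set es"
proof -
  have "idx P p < length (Lj es j)" using idx_less[OF assms(1,4)] Lj_props[OF assms(3)] assms(2) by simp
  then have "Lj es j ! idx P p \<in> set (Lj es j)" by simp
  then show ?thesis unfolding asg_def using Lj_props[OF assms(3)] by simp
qed

lemma asg_mono:
  assumes "finite P" "card P = m" "card {b. (j,b) \<in> set es} = m" "p \<in> P" "q \<in> P" "fst p < fst q"
  shows "asg P es j p < asg P es j q"
proof -
  have "idx P p < idx P q" using idx_mono assms by auto
  moreover have "idx P q < length (Lj es j)" using idx_less[OF assms(1,5)] Lj_props[OF assms(3)] assms(2) by simp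
  ultimately show ?thesis unfolding asg_def using Lj_props(3)[OF assms(3)]
    by (simp add: sorted_wrt_nth_less)
qed

lemma asg_inj:
  assumes "finite P" "card P = m" "card {b. (j,b) \<in> set es} = m" "inj_on fst P" "p \<in> P" "q \<in> P"
    "asg P es j p = asg P es j q"
  shows "p = q"
proof (rule ccontr)
  assume "p \<noteq> q"
  then have "fst p \<noteq> fst q" using assms(4-6) by (auto simp: inj_on_def)
  then have "fst p < fst q \<or> fst q < fst p" by auto
  then show False using asg_mono[OF assms(1-3)] assms(5-7) by (metis less_irrefl)
qed

definition frc :: "nat \<Rightarrow> nat \<Rightarrow> real" where "frc N j = (real j + 1) / (real N + 1)"

lemma frc_bounds: "j < N \<Longrightarrow> 0 < frc N j \<and> frc N j < 1"
  unfolding frc_def by (auto simp: field_simps)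

lemma frc_inj: "frc N j = frc N j' \<Longrightarrow> j = j'"
  unfolding frc_def by (auto simp: field_simps)

lemma nat_frac_eq:
  fixes a a' :: nat and f f' :: real
  assumes "0 < f" "f < 1" "0 < f'" "f' < 1" "real a + f = real a' + f'"
  shows "a = a' \<and> f = f'"
proof -
  have "real a < real a' + 1" "real a' < real a + 1" using assms by linarith+
  then have aa: "a = a'" by linarith
  then have "real a + f = real a + f'" using assms(5) by simp
  then show ?thesis using aa by simp
qed

lemma nat_in_unit:
  fixes a b :: nat and f :: real
  assumes "0 < f" "f < 1"
  shows "real b < real a + f \<and> real a + f < real b + 1 \<longleftrightarrow> a = b"
proof
  assume "real b < real a + f \<and> real a + f < real b + 1"
  then have "real b < real a + 1" "real a < real b + 1" using assms by linarith+
  then show "a = b" by linarith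
qed (use assms in auto)

definition tgt :: "(real \<times> real) set \<Rightarrow> nat \<Rightarrow> (nat \<times> nat) list \<Rightarrow> nat \<Rightarrow> real \<times> real \<Rightarrow> real" where
  "tgt P N es j p = real (asg P es j p) + frc N j"

definition pof :: "(real \<times> real) set \<Rightarrow> real \<Rightarrow> real \<times> real" where
  "pof P x = (THE p. p \<in> P \<and> fst p = x)"

lemma pof: "inj_on fst P \<Longrightarrow> p \<in> P \<Longrightarrow> pof P (fst p) = p"
  unfolding pof_def by (rule the_equality) (auto simp: inj_on_def)

definition fmap :: "(real \<times> real) set \<Rightarrow> nat \<Rightarrow> (nat \<times> nat) list \<Rightarrow> nat \<Rightarrow> real \<Rightarrow> real" where
  "fmap P N es j = (SOME f. (\<forall>x y. x < y \<longrightarrow> f x < f y) \<and> (\<forall>x\<in>fst ` P. f x = tgt P N es j (pof P x)))"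

lemma fmap:
  assumes "finite P" "card P = m" "card {b. (j,b) \<in> set es} = m" "inj_on fst P"
  shows "(\<forall>x y. x < y \<longrightarrow> fmap P N es j x < fmap P N es j y) \<and> (\<forall>p\<in>P. fmap P N es j (fst p) = tgt P N es j p)"
proof -
  have hm: "\<forall>x\<in>fst ` P. \<forall>y\<in>fst ` P. x < y \<longrightarrow> tgt P N es j (pof P x) < tgt P N es j (pof P y)"
  proof (intro ballI impI)
    fix x y assume "x \<in> fst ` P" "y \<in> fst ` P" "x < y"
    then obtain p q where pq: "p \<in> P" "q \<in> P" "x = fst p" "y = fst q" by auto
    then have "asg P es j p < asg P es j q" using asg_mono[OF assms(1-3)] \<open>x < y\<close> by auto
    then show "tgt P N es j (pof P x) < tgt P N es j (pof P y)"
      using pof[OF assms(4)] pq unfolding tgt_def by simp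
  qed
  have fin: "finite (fst ` P)" using assms by simp
  have "\<exists>f. (\<forall>x y. x < y \<longrightarrow> f x < f y) \<and> (\<forall>x\<in>fst ` P. f x = tgt P N es j (pof P x))"
    using mono_extend[OF fin, rule_format, of "\<lambda>x. tgt P N es j (pof P x)"] hm by simp
  then have "(\<forall>x y. x < y \<longrightarrow> fmap P N es j x < fmap P N es j y) \<and> (\<forall>x\<in>fst ` P. fmap P N es j x = tgt P N es j (pof P x))"
    unfolding fmap_def by (rule someI_ex)
  then show ?thesis using pof[OF assms(4)] by auto
qed

definition Tp :: "(nat \<Rightarrow> real \<Rightarrow> real) \<Rightarrow> nat \<Rightarrow> real \<times> real \<Rightarrow> real \<times> real" where
  "Tp F j z = (F j (fst z), sig (snd z) + 2 * real j)"

definition Tr :: "(nat \<Rightarrow> real \<Rightarrow> real) \<Rightarrow> nat \<Rightarrow> (real \<times> real) set \<Rightarrow> (real \<times> real) set" where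
  "Tr F j S = (case rpar S of (a, b, c, d) \<Rightarrow> open_rect (F j a) (sig b + 2 * real j) (F j c) (sig d + 2 * real j))"

definition blk :: "nat \<Rightarrow> nat \<Rightarrow> (real \<times> real) set" where
  "blk N b = open_rect (real b) 0 (real b + 1) (2 * real N)"

lemma smono_less_iff:
  fixes f :: "real \<Rightarrow> real"
  assumes sm: "\<forall>x y. x < y \<longrightarrow> f x < f y"
  shows "(f a < f b) = (a < b)"
proof
  assume fab: "f a < f b"
  show "a < b"
  proof (rule ccontr)
    assume "\<not> a < b"
    then have "b < a \<or> b = a" by auto
    then show False
    proof
      assume "b < a" then have "f b < f a" using sm by blast
      then show False using fab by simp
    next
      assume "b = a" then show False using fab by simp
    qed
  qed
next
  assume "a < b" then show "f a < f b" using sm by blast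
qed

lemma Tr_rect: "is_open_rect (Tr F j S)"
proof -
  obtain a b c d where r: "rpar S = (a, b, c, d)" by (cases "rpar S") auto
  show ?thesis unfolding Tr_def is_open_rect_def r by auto
qed

lemma blk_rect: "is_open_rect (blk N b)"
  unfolding blk_def is_open_rect_def by auto

lemma Tp_in_Tr:
  assumes sm: "\<forall>x y. x < y \<longrightarrow> F j' x < F j' y" and S: "is_open_rect S"
  shows "Tp F j z \<in> Tr F j' S \<longleftrightarrow> j = j' \<and> z \<in> S"
proof -
  obtain a b c d where r: "rpar S = (a, b, c, d)" by (cases "rpar S") auto
  have Seq: "S = open_rect a b c d" using rpar[OF S] r by simp
  obtain x y where z: "z = (x, y)" by (cases z)
  have "Tp F j z \<in> Tr F j' S \<longleftrightarrow> F j' a < F j x \<and> F j x < F j' c \<and> sig b + 2 * real j' < sig y + 2 * real j \<and> sig y + 2 * real j < sig d + 2 * real j'"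
    unfolding Tp_def Tr_def r z by (simp add: open_rect_mem)
  also have "\<dots> \<longleftrightarrow> j = j' \<and> z \<in> S"
  proof
    assume H: "F j' a < F j x \<and> F j x < F j' c \<and> sig b + 2 * real j' < sig y + 2 * real j \<and> sig y + 2 * real j < sig d + 2 * real j'"
    have "sig b + 2 * real j' < sig y + 2 * real j + 1" "sig y + 2 * real j < sig b + 2 * real j' + 1"
      using H sig_bounds[of b] sig_bounds[of y] sig_bounds[of d] by linarith+
    then have jj: "j = j'" using nat_eq_from_strip[OF sig_bounds(1,2) sig_bounds(1,2)] by metis
    then show "j = j' \<and> z \<in> S" using H unfolding Seq z open_rect_mem
      by (simp add: smono_less_iff[OF sm] sig_less_iff)
  next
    assume "j = j' \<and> z \<in> S"
    then show "F j' a < F j x \<and> F j x < F j' c \<and> sig b + 2 * real j' < sig y + 2 * real j \<and> sig y + 2 * real j < sig d + 2 * real j'"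
      unfolding Seq z open_rect_mem by (simp add: smono_less_iff[OF sm] sig_less_iff)
  qed
  finally show ?thesis .
qed

lemma Tr_inj:
  assumes sm: "\<forall>x y. x < y \<longrightarrow> F j x < F j y" and S: "is_open_rect S" "is_open_rect S'"
    and eq: "Tr F j S = Tr F j S'"
  shows "S = S'"
proof -
  have "\<And>z. z \<in> S \<longleftrightarrow> z \<in> S'"
    using Tp_in_Tr[where F=F and j'=j and j=j, OF sm S(1)] Tp_in_Tr[where F=F and j'=j and j=j, OF sm S(2)] eq by auto
  then show ?thesis by auto
qed

lemma blk_notin_Tr:
  assumes "j < N" shows "blk N b \<noteq> Tr F j S"
proof
  assume eq: "blk N b = Tr F j S"
  obtain a b' c d where r: "rpar S = (a, b', c, d)" by (cases "rpar S") auto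
  have "(real b + 1/2, 2 * real N - 1/2) \<in> blk N b" unfolding blk_def open_rect_mem using assms by auto
  then have "(real b + 1/2, 2 * real N - 1/2) \<in> Tr F j S" using eq by simp
  then have "2 * real N - 1/2 < sig d + 2 * real j" unfolding Tr_def r by (simp add: open_rect_mem)
  moreover have "real j + 1 \<le> real N" using assms by simp
  ultimately show False using sig_bounds[of d] by linarith
qed

lemma incidence_adj_sym: "incidence_adj P R u v \<Longrightarrow> incidence_adj P R v u"
  unfolding incidence_adj_def by blast

type_synonym vtx = "(nat \<times> ((real \<times> real) + (real \<times> real) set)) + nat"

lemma step:
  fixes P :: "(real \<times> real) set" and R :: "(real \<times> real) set set" and g \<delta> m k N M :: nat
  assumes finP: "finite P" and finR: "finite R" and rects: "\<forall>S\<in>R. is_open_rect S"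
    and injx: "inj_on fst P" and gir: "girth_at_least (incidence_adj P R) g" and g3: "3 \<le> g"
    and deg: "\<forall>p\<in>P. \<delta> \<le> card {S\<in>R. p \<in> S}" and cP: "card P = m"
    and k1: "1 \<le> k" and cond: "N * m + k * ((g - 1) * (m + k) ^ (g - 1)) < k * M"
  shows "\<exists>P' R1 R2. finite P' \<and> card P' = N * m \<and> finite R1 \<and> card R1 \<le> N * card R \<and> finite R2 \<and> card R2 \<le> M \<and>
     (\<forall>S\<in>R1 \<union> R2. is_open_rect S) \<and> inj_on fst P' \<and> girth_at_least (incidence_adj P' (R1 \<union> R2)) g \<and>
     (\<forall>p\<in>P'. \<delta> \<le> card {S\<in>R1. p \<in> S}) \<and> (\<forall>p\<in>P'. \<exists>S\<in>R2. p \<in> S \<and> S \<notin> R1)"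
proof -
  have G2: "2 \<le> g - 1" using g3 by simp
  obtain es where dist: "distinct es" and sub: "set es \<subseteq> {..<N} \<times> {..<M}"
    and rowm: "\<forall>j<N. card {b. (j,b) \<in> set es} = m"
    and far: "\<forall>i<length es. \<forall>l. walk (Bg (take i es)) (Inl (fst (es ! i))) (Inr (snd (es ! i))) l \<longrightarrow> g - 1 \<le> l"
    using greedy[OF k1 G2 cond] by blast
  define F where "F = fmap P N es"
  have Fm: "\<And>j. j < N \<Longrightarrow> (\<forall>x y. x < y \<longrightarrow> F j x < F j y)"
    unfolding F_def using fmap[OF finP cP _ injx] rowm by blast
  have Ft: "\<And>j p. j < N \<Longrightarrow> p \<in> P \<Longrightarrow> F j (fst p) = tgt P N es j p"
    unfolding F_def using fmap[OF finP cP _ injx] rowm by blast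
  have asgin: "\<And>j p. j < N \<Longrightarrow> p \<in> P \<Longrightarrow> (j, asg P es j p) \<in> set es"
    using asg_in[OF finP cP] rowm by blast
  have asgM: "\<And>j p. j < N \<Longrightarrow> p \<in> P \<Longrightarrow> asg P es j p < M"
    using asgin sub by blast
  have asginj: "\<And>j p q. j < N \<Longrightarrow> p \<in> P \<Longrightarrow> q \<in> P \<Longrightarrow> asg P es j p = asg P es j q \<Longrightarrow> p = q"
    using asg_inj[OF finP cP _ injx] rowm by blast
  have fstTp: "\<And>j p. j < N \<Longrightarrow> p \<in> P \<Longrightarrow> fst (Tp F j p) = real (asg P es j p) + frc N j"
    unfolding Tp_def using Ft unfolding tgt_def by simp
  have TpB: "\<And>j p b. j < N \<Longrightarrow> p \<in> P \<Longrightarrow> (Tp F j p \<in> blk N b \<longleftrightarrow> asg P es j p = b)"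
  proof -
    fix j p b assume j: "j < N" and p: "p \<in> P"
    have y1: "0 < sig (snd p) + 2 * real j" using sig_bounds[of "snd p"] by simp
    have "real j + 1 \<le> real N" using j by simp
    then have y2: "sig (snd p) + 2 * real j < 2 * real N" using sig_bounds[of "snd p"] by linarith
    have "Tp F j p \<in> blk N b \<longleftrightarrow> real b < real (asg P es j p) + frc N j \<and> real (asg P es j p) + frc N j < real b + 1"
      using fstTp[OF j p] y1 y2 unfolding blk_def by (cases "Tp F j p") (auto simp: open_rect_mem Tp_def)
    also have "\<dots> \<longleftrightarrow> asg P es j p = b" using nat_in_unit frc_bounds[OF j] by blast
    finally show "Tp F j p \<in> blk N b \<longleftrightarrow> asg P es j p = b" .
  qed
  have TpTr: "\<And>j j' z S. j' < N \<Longrightarrow> S \<in> R \<Longrightarrow> (Tp F j z \<in> Tr F j' S \<longleftrightarrow> j = j' \<and> z \<in> S)"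
    using Tp_in_Tr Fm rects by blast
  define P' where "P' = (\<lambda>(j,p). Tp F j p) ` ({..<N} \<times> P)"
  define R1 where "R1 = (\<lambda>(j,S). Tr F j S) ` ({..<N} \<times> R)"
  define R2 where "R2 = blk N ` {..<M}"
  have Tpinj: "inj_on (\<lambda>(j,p). Tp F j p) ({..<N} \<times> P)"
  proof (rule inj_onI)
    fix x y assume x: "x \<in> {..<N} \<times> P" and y: "y \<in> {..<N} \<times> P" and e: "(\<lambda>(j,p). Tp F j p) x = (\<lambda>(j,p). Tp F j p) y"
    obtain j p j' p' where xy: "x = (j,p)" "y = (j',p')" by (cases x, cases y) auto
    have e2: "sig (snd p) + 2 * real j = sig (snd p') + 2 * real j'" "F j (fst p) = F j' (fst p')"
      using e unfolding xy Tp_def by auto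
    have jj: "j = j'"
      using nat_eq_from_strip[where u="sig (snd p)" and v="sig (snd p')" and j=j and j'=j', OF sig_bounds(1,2) sig_bounds(1,2)] e2(1) by linarith
    have "sig (snd p) = sig (snd p')" using e2(1) jj by simp
    then have s: "snd p = snd p'" using sig_less_iff by (metis not_less_iff_gr_or_eq)
    have jN: "j < N" using x xy by auto
    have "fst p = fst p'" using e2(2) jj Fm[OF jN] smono_less_iff[OF Fm[OF jN]] by (metis not_less_iff_gr_or_eq)
    then show "x = y" using s xy jj by (simp add: prod_eq_iff)
  qed
  have finP': "finite P'" unfolding P'_def using finP by simp
  have cP': "card P' = N * m" unfolding P'_def using card_image[OF Tpinj] cP by (simp add: card_cartesian_product)
  have finR1: "finite R1" unfolding R1_def using finR by simp
  have cR1: "card R1 \<le> N * card R" unfolding R1_def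
    using card_image_le[of "{..<N} \<times> R" "\<lambda>(j,S). Tr F j S"] finR by (simp add: card_cartesian_product)
  have finR2: "finite R2" unfolding R2_def by simp
  have cR2: "card R2 \<le> M" unfolding R2_def using card_image_le[of "{..<M}" "blk N"] by simp
  have rects': "\<forall>S\<in>R1 \<union> R2. is_open_rect S" unfolding R1_def R2_def using Tr_rect blk_rect by auto
  have injP': "inj_on fst P'"
  proof (rule inj_onI)
    fix q q' assume q: "q \<in> P'" and q': "q' \<in> P'" and e: "fst q = fst q'"
    obtain j p where jp: "j < N" "p \<in> P" "q = Tp F j p" using q unfolding P'_def by auto
    obtain j' p' where jp': "j' < N" "p' \<in> P" "q' = Tp F j' p'" using q' unfolding P'_def by auto
    have "real (asg P es j p) + frc N j = real (asg P es j' p') + frc N j'"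
      using e fstTp jp jp' by simp
    then have "asg P es j p = asg P es j' p' \<and> frc N j = frc N j'"
      using nat_frac_eq frc_bounds[OF jp(1)] frc_bounds[OF jp'(1)] by blast
    then have "j = j'" "asg P es j p = asg P es j p'" using frc_inj by auto
    then show "q = q'" using asginj[OF jp(1,2) jp'(2)] jp jp' by simp
  qed
  have deg': "\<forall>p\<in>P'. \<delta> \<le> card {S\<in>R1. p \<in> S}"
  proof
    fix q assume q: "q \<in> P'"
    obtain j p where jp: "j < N" "p \<in> P" "q = Tp F j p" using q unfolding P'_def by auto
    have inT: "\<And>S. S \<in> R \<Longrightarrow> p \<in> S \<Longrightarrow> q \<in> Tr F j S" using TpTr[OF jp(1)] jp(3) by blast
    have sub1: "Tr F j ` {S\<in>R. p \<in> S} \<subseteq> {S\<in>R1. q \<in> S}"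
    proof
      fix S' assume "S' \<in> Tr F j ` {S\<in>R. p \<in> S}"
      then obtain S where "S \<in> R" "p \<in> S" "S' = Tr F j S" by auto
      then show "S' \<in> {S\<in>R1. q \<in> S}" using inT jp(1) unfolding R1_def by auto
    qed
    have "inj_on (Tr F j) {S\<in>R. p \<in> S}"
      using Tr_inj[where F=F and j=j, OF Fm[OF jp(1)]] rects by (auto simp: inj_on_def)
    then have "card (Tr F j ` {S\<in>R. p \<in> S}) = card {S\<in>R. p \<in> S}" by (rule card_image)
    moreover have "card (Tr F j ` {S\<in>R. p \<in> S}) \<le> card {S\<in>R1. q \<in> S}"
      using sub1 finR1 by (intro card_mono) auto
    ultimately show "\<delta> \<le> card {S\<in>R1. q \<in> S}" using deg jp by force
  qed
  have blkdeg: "\<forall>p\<in>P'. \<exists>S\<in>R2. p \<in> S \<and> S \<notin> R1"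
  proof
    fix q assume q: "q \<in> P'"
    obtain j p where jp: "j < N" "p \<in> P" "q = Tp F j p" using q unfolding P'_def by auto
    have "blk N (asg P es j p) \<in> R2" unfolding R2_def using asgM jp by auto
    moreover have "q \<in> blk N (asg P es j p)" using TpB jp by simp
    moreover have "blk N (asg P es j p) \<notin> R1" unfolding R1_def using blk_notin_Tr by fastforce
    ultimately show "\<exists>S\<in>R2. q \<in> S \<and> S \<notin> R1" by blast
  qed
  define G0 where "G0 = (copyG (incidence_adj P R) :: vtx \<Rightarrow> vtx \<Rightarrow> bool)"
  define pt where "pt = (\<lambda>j b. THE p. p \<in> P \<and> asg P es j p = b)"
  define Fe where "Fe = (\<lambda>(j,b). ((Inl (j, Inl (pt j b)), Inr b) :: vtx \<times> vtx))"
  define ed where "ed = map Fe es"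
  define A where "A = withE G0 ed"
  have symG0: "\<And>a b. G0 a b \<Longrightarrow> G0 b a" unfolding G0_def copyG_def using incidence_adj_sym by blast
  have girG0: "girth_at_least G0 g" unfolding G0_def by (rule girth_copyG[OF gir])
  define \<phi> where "\<phi> = (\<lambda>v::vtx. case v of Inl jv \<Rightarrow> (Inl (fst jv) :: nat + nat) | Inr b \<Rightarrow> Inr b)"
  have farA: "\<And>i l. i < length ed \<Longrightarrow> walk (withE G0 (take i ed)) (fst (ed ! i)) (snd (ed ! i)) l \<Longrightarrow> g \<le> l + 1"
  proof -
    fix i l assume i: "i < length ed" and w: "walk (withE G0 (take i ed)) (fst (ed ! i)) (snd (ed ! i)) l"
    have ie: "i < length es" using i unfolding ed_def by simp
    have tk: "take i ed = map Fe (take i es)" unfolding ed_def by (simp add: take_map)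
    obtain j b where jb: "es ! i = (j, b)" by (cases "es ! i") auto
    have edi: "ed ! i = (Inl (j, Inl (pt j b)), Inr b)" unfolding ed_def Fe_def using ie jb by simp
    have hom: "\<And>a c. withE G0 (map Fe (take i es)) a c \<Longrightarrow> \<phi> a = \<phi> c \<or> Bg (take i es) (\<phi> a) (\<phi> c)"
    proof -
      fix a c assume "withE G0 (map Fe (take i es)) a c"
      then consider "G0 a c" | x y where "(x, y) \<in> set (map Fe (take i es))" "(a = x \<and> c = y) \<or> (a = y \<and> c = x)"
        unfolding withE_def by blast
      then show "\<phi> a = \<phi> c \<or> Bg (take i es) (\<phi> a) (\<phi> c)"
      proof cases
        case 1 then show ?thesis unfolding G0_def copyG_def \<phi>_def by auto
      next
        case 2
        then obtain j' b' where "(j', b') \<in> set (take i es)" "x = Inl (j', Inl (pt j' b'))" "y = Inr b'"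
          unfolding Fe_def by auto
        then show ?thesis using 2(2) unfolding \<phi>_def Bg_iff by auto
      qed
    qed
    obtain l' where l': "l' \<le> l" "walk (Bg (take i es)) (\<phi> (fst (ed ! i))) (\<phi> (snd (ed ! i))) l'"
      using walk_proj[where E="withE G0 (map Fe (take i es))" and \<phi>=\<phi> and E'="Bg (take i es)", OF hom] w tk by metis
    then have "walk (Bg (take i es)) (Inl (fst (es ! i))) (Inr (snd (es ! i))) l'"
      using edi jb unfolding \<phi>_def by simp
    then have "g - 1 \<le> l'" using far ie by blast
    then show "g \<le> l + 1" using l' by linarith
  qed
  have girA: "girth_at_least A g" unfolding A_def by (rule girth_withE[OF girG0 symG0 farA])
  have symA: "\<And>a b. A a b \<Longrightarrow> A b a" unfolding A_def withE_def using symG0 by blast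
  define dec where "dec = (\<lambda>q. SOME jp. fst jp < N \<and> snd jp \<in> P \<and> Tp F (fst jp) (snd jp) = q)"
  define decr where "decr = (\<lambda>S. SOME jS. fst jS < N \<and> snd jS \<in> R \<and> Tr F (fst jS) (snd jS) = S)"
  define bdec where "bdec = (\<lambda>S. SOME b. b < M \<and> S = blk N b)"
  define H where "H = (\<lambda>u. case u of Inl q \<Rightarrow> (Inl (fst (dec q), Inl (snd (dec q))) :: vtx)
      | Inr S \<Rightarrow> (if \<exists>b<M. S = blk N b then Inr (bdec S) else Inl (fst (decr S), Inr (snd (decr S)))))"
  have HrB: "\<And>S. \<exists>b<M. S = blk N b \<Longrightarrow> H (Inr S) = Inr (bdec S)" unfolding H_def by simp
  have HrN: "\<And>S. \<not> (\<exists>b<M. S = blk N b) \<Longrightarrow> H (Inr S) = Inl (fst (decr S), Inr (snd (decr S)))"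
  proof -
    fix S assume a: "\<not> (\<exists>b<M. S = blk N b)"
    show "H (Inr S) = Inl (fst (decr S), Inr (snd (decr S)))" unfolding H_def sum.case if_not_P[OF a] ..
  qed
  have dec_ok: "\<And>q. q \<in> P' \<Longrightarrow> fst (dec q) < N \<and> snd (dec q) \<in> P \<and> Tp F (fst (dec q)) (snd (dec q)) = q"
  proof -
    fix q assume "q \<in> P'"
    then have "\<exists>jp. fst jp < N \<and> snd jp \<in> P \<and> Tp F (fst jp) (snd jp) = q" unfolding P'_def by auto
    then show "fst (dec q) < N \<and> snd (dec q) \<in> P \<and> Tp F (fst (dec q)) (snd (dec q)) = q"
      unfolding dec_def by (rule someI_ex)
  qed
  have decr_ok: "\<And>S. S \<in> R1 \<Longrightarrow> fst (decr S) < N \<and> snd (decr S) \<in> R \<and> Tr F (fst (decr S)) (snd (decr S)) = S"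
  proof -
    fix S assume "S \<in> R1"
    then have "\<exists>jS. fst jS < N \<and> snd jS \<in> R \<and> Tr F (fst jS) (snd jS) = S" unfolding R1_def by auto
    then show "fst (decr S) < N \<and> snd (decr S) \<in> R \<and> Tr F (fst (decr S)) (snd (decr S)) = S"
      unfolding decr_def by (rule someI_ex)
  qed
  have bdec_ok: "\<And>S. \<exists>b<M. S = blk N b \<Longrightarrow> bdec S < M \<and> S = blk N (bdec S)"
  proof -
    fix S assume "\<exists>b<M. S = blk N b"
    then have "\<exists>b. b < M \<and> S = blk N b" by blast
    then show "bdec S < M \<and> S = blk N (bdec S)" unfolding bdec_def by (rule someI_ex)
  qed
  have key: "\<And>q S. q \<in> P' \<Longrightarrow> S \<in> R1 \<union> R2 \<Longrightarrow> q \<in> S \<Longrightarrow> A (H (Inl q)) (H (Inr S))"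
  proof -
    fix q S assume q: "q \<in> P'" and S: "S \<in> R1 \<union> R2" and qS: "q \<in> S"
    obtain j p where jp: "dec q = (j, p)" by (cases "dec q") auto
    have j: "j < N" and p: "p \<in> P" and qe: "Tp F j p = q" using dec_ok[OF q] jp by auto
    have Hq: "H (Inl q) = Inl (j, Inl p)" unfolding H_def using jp by simp
    show "A (H (Inl q)) (H (Inr S))"
    proof (cases "\<exists>b<M. S = blk N b")
      case True
      define b where "b = bdec S"
      have b: "b < M" "S = blk N b" using bdec_ok[OF True] unfolding b_def by auto
      have HS: "H (Inr S) = Inr b" unfolding b_def using HrB[OF True] .
      have ab: "asg P es j p = b" using TpB[OF j p] qS qe b by simp
      have ptb: "pt j b = p" unfolding pt_def
        by (rule the_equality) (use ab asginj[OF j] p in auto)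
      have "(j, b) \<in> set es" using asgin[OF j p] ab by simp
      then have "Fe (j, b) \<in> set ed" unfolding ed_def by simp
      then have "(Inl (j, Inl p), Inr b) \<in> set ed" unfolding Fe_def using ptb by simp
      then show ?thesis unfolding Hq HS A_def withE_def by blast
    next
      case False
      then have S1: "S \<in> R1" using S unfolding R2_def by auto
      obtain j' S0 where jS: "decr S = (j', S0)" by (cases "decr S") auto
      have j': "j' < N" and S0: "S0 \<in> R" and Se: "Tr F j' S0 = S" using decr_ok[OF S1] jS by auto
      have HS: "H (Inr S) = Inl (j', Inr S0)" using HrN[OF False] jS by simp
      have "j = j' \<and> p \<in> S0" using TpTr[OF j' S0, of j p] qe Se qS by simp
      then have "G0 (Inl (j, Inl p)) (Inl (j', Inr S0))" unfolding G0_def copyG_def incidence_adj_def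
        using p S0 by blast
      then show ?thesis unfolding Hq HS A_def withE_def by blast
    qed
  qed
  have hom: "\<And>u v. incidence_adj P' (R1 \<union> R2) u v \<Longrightarrow> A (H u) (H v)"
  proof -
    fix u v assume "incidence_adj P' (R1 \<union> R2) u v"
    then obtain q S where qS: "q \<in> P'" "S \<in> R1 \<union> R2" "q \<in> S" and uv: "(u = Inl q \<and> v = Inr S) \<or> (u = Inr S \<and> v = Inl q)"
      unfolding incidence_adj_def by blast
    show "A (H u) (H v)" using uv key[OF qS] symA by blast
  qed
  have inj: "inj_on H {u. \<exists>v. incidence_adj P' (R1 \<union> R2) u v}"
  proof (rule inj_onI)
    fix u u' assume u: "u \<in> {u. \<exists>v. incidence_adj P' (R1 \<union> R2) u v}" and u': "u' \<in> {u. \<exists>v. incidence_adj P' (R1 \<union> R2) u v}"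
      and e: "H u = H u'"
    have cls: "\<And>w. w \<in> {u. \<exists>v. incidence_adj P' (R1 \<union> R2) u v} \<Longrightarrow> (\<exists>q\<in>P'. w = Inl q) \<or> (\<exists>S\<in>R1 \<union> R2. w = Inr S)"
      unfolding incidence_adj_def by blast
    have Hl: "\<And>q q'. q \<in> P' \<Longrightarrow> q' \<in> P' \<Longrightarrow> H (Inl q) = H (Inl q') \<Longrightarrow> q = q'"
    proof -
      fix q q' assume "q \<in> P'" "q' \<in> P'" "H (Inl q) = H (Inl q')"
      then have "dec q = dec q'" unfolding H_def by (simp add: prod_eq_iff)
      then show "q = q'" using dec_ok \<open>q \<in> P'\<close> \<open>q' \<in> P'\<close> by metis
    qed
    have Hlr: "\<And>q S. H (Inl q) \<noteq> H (Inr S)" unfolding H_def by auto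
    have Hr: "\<And>S S'. S \<in> R1 \<union> R2 \<Longrightarrow> S' \<in> R1 \<union> R2 \<Longrightarrow> H (Inr S) = H (Inr S') \<Longrightarrow> S = S'"
    proof -
      fix S S' assume S: "S \<in> R1 \<union> R2" and S': "S' \<in> R1 \<union> R2" and e: "H (Inr S) = H (Inr S')"
      show "S = S'"
      proof (cases "\<exists>b<M. S = blk N b")
        case True
        show ?thesis
        proof (cases "\<exists>b<M. S' = blk N b")
          case True': True
          then have "bdec S = bdec S'" using e HrB[OF True] HrB[OF True'] by simp
          then show ?thesis using bdec_ok[OF True] bdec_ok[OF True'] by metis
        next
          case False
          then show ?thesis using e HrB[OF True] HrN[OF False] by simp
        qed
      next
        case False
        then have S1: "S \<in> R1" using S unfolding R2_def by auto
        show ?thesis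
        proof (cases "\<exists>b<M. S' = blk N b")
          case True
          then show ?thesis using e HrB[OF True] HrN[OF False] by simp
        next
          case False': False
          then have S1': "S' \<in> R1" using S' unfolding R2_def by auto
          have "decr S = decr S'" using e HrN[OF False] HrN[OF False'] by (simp add: prod_eq_iff)
          then show ?thesis using decr_ok[OF S1] decr_ok[OF S1'] by metis
        qed
      qed
    qed
    from cls[OF u] cls[OF u'] show "u = u'" using Hl Hr Hlr e by metis
  qed
  have girP': "girth_at_least (incidence_adj P' (R1 \<union> R2)) g"
    by (rule girth_mono_hom[OF girA hom inj])
  show ?thesis
    using finP' cP' finR1 cR1 finR2 cR2 rects' injP' girP' deg' blkdeg by blast
qed

definition kk :: "nat \<Rightarrow> nat" where "kk d = 2 ^ (d + 3)"

definition Nn :: "nat \<Rightarrow> nat \<Rightarrow> nat \<Rightarrow> nat" where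
  "Nn g d m = kk d * ((g - 1) * (m + kk d) ^ (g - 1))"

fun ms :: "nat \<Rightarrow> nat \<Rightarrow> nat" where
  "ms g 0 = 1"
| "ms g (Suc d) = Nn g d (ms g d) * ms g d"

lemma base_girth:
  "girth_at_least (incidence_adj {(0::real, 0::real)} {open_rect (-1) (-1) 1 1}) g"
  unfolding girth_at_least_def
proof (intro allI impI)
  fix k assume "has_cycle_of_length (incidence_adj {(0::real, 0::real)} {open_rect (-1) (-1) 1 1}) k"
  then obtain vs where k3: "3 \<le> k" and len: "length vs = k" and dist: "distinct vs"
    and adj: "\<forall>i<k. incidence_adj {(0::real, 0::real)} {open_rect (-1) (-1) 1 1} (vs ! i) (vs ! ((i + 1) mod k))"
    unfolding has_cycle_of_length_def by auto
  have "set vs \<subseteq> {Inl (0,0), Inr (open_rect (-1) (-1) 1 1)}"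
  proof
    fix x assume "x \<in> set vs"
    then obtain i where "i < k" "x = vs ! i" using len by (auto simp: in_set_conv_nth)
    then show "x \<in> {Inl (0,0), Inr (open_rect (-1) (-1) 1 1)}" using adj unfolding incidence_adj_def by force
  qed
  then have "card (set vs) \<le> card {Inl (0::real,0::real), Inr (open_rect (-1) (-1) 1 1) :: (real \<times> real) + (real \<times> real) set}"
    by (intro card_mono) auto
  also have "\<dots> \<le> 2" by (simp add: card_insert_if)
  finally have "card (set vs) \<le> 2" .
  then show "g \<le> k" using dist len k3 by (simp add: distinct_card)
qed

lemma ms_pos: "3 \<le> g \<Longrightarrow> 1 \<le> ms g d"
proof (induction d)
  case 0 then show ?case by simp
next
  case (Suc d)
  have "1 \<le> Nn g d (ms g d)" unfolding Nn_def kk_def using Suc.prems Suc.IH by simp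
  then show ?case using Suc by simp
qed

lemma level:
  assumes g3: "3 \<le> g"
  shows "\<exists>P R. finite P \<and> card P = ms g d \<and> finite R \<and> real (card R) \<le> (2 - 1 / 2 ^ d) * real (ms g d) \<and>
    (\<forall>S\<in>R. is_open_rect S) \<and> inj_on fst P \<and> girth_at_least (incidence_adj P R) g \<and>
    (\<forall>p\<in>P. d + 1 \<le> card {S\<in>R. p \<in> S})"
proof (induction d)
  case 0
  have r: "is_open_rect (open_rect (-1) (-1) 1 1)" unfolding is_open_rect_def by blast
  have "(0::real, 0::real) \<in> open_rect (-1) (-1) 1 1" by (simp add: open_rect_mem)
  then have "{S\<in>{open_rect (-1) (-1) 1 1}. (0::real, 0::real) \<in> S} = {open_rect (-1) (-1) 1 1}" by auto
  then have "\<forall>p\<in>{(0::real, 0::real)}. 0 + 1 \<le> card {S\<in>{open_rect (-1) (-1) 1 1}. p \<in> S}" by simp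
  then show ?case using base_girth r
    by (intro exI[of _ "{(0::real, 0::real)}"] exI[of _ "{open_rect (-1) (-1) 1 1}"]) auto
next
  case (Suc d)
  then obtain P R where finP: "finite P" and cP: "card P = ms g d" and finR: "finite R"
    and cR: "real (card R) \<le> (2 - 1 / 2 ^ d) * real (ms g d)" and rects: "\<forall>S\<in>R. is_open_rect S"
    and injx: "inj_on fst P" and gir: "girth_at_least (incidence_adj P R) g"
    and deg: "\<forall>p\<in>P. d + 1 \<le> card {S\<in>R. p \<in> S}" by blast
  define m where "m = ms g d"
  define k where "k = kk d"
  define X where "X = (g - 1) * (m + k) ^ (g - 1)"
  define N where "N = k * X"
  define M where "M = 2 * m * X + 1"
  have m1: "1 \<le> m" unfolding m_def using ms_pos[OF g3] by simp
  have k1: "1 \<le> k" unfolding k_def kk_def by simp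
  have X1: "1 \<le> X" unfolding X_def using g3 k1 by simp
  have cond: "N * m + k * ((g - 1) * (m + k) ^ (g - 1)) < k * M"
  proof -
    have "N * m + k * ((g - 1) * (m + k) ^ (g - 1)) = k * X * (m + 1)" unfolding N_def X_def[symmetric] by (simp add: algebra_simps)
    also have "\<dots> \<le> k * X * (2 * m)" using m1 by (intro mult_left_mono) auto
    also have "\<dots> < k * M" unfolding M_def using k1 by (simp add: algebra_simps)
    finally show ?thesis .
  qed
  obtain P' R1 R2 where finP': "finite P'" and cP': "card P' = N * m" and finR1: "finite R1"
    and cR1: "card R1 \<le> N * card R" and finR2: "finite R2" and cR2: "card R2 \<le> M"
    and rects': "\<forall>S\<in>R1 \<union> R2. is_open_rect S" and injP': "inj_on fst P'"
    and gir': "girth_at_least (incidence_adj P' (R1 \<union> R2)) g"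
    and deg': "\<forall>p\<in>P'. d + 1 \<le> card {S\<in>R1. p \<in> S}" and blkd: "\<forall>p\<in>P'. \<exists>S\<in>R2. p \<in> S \<and> S \<notin> R1"
    using step[OF finP finR rects injx gir g3 deg cP[folded m_def] k1 cond] by blast
  have msS: "ms g (Suc d) = N * m" unfolding N_def X_def k_def m_def by (simp add: Nn_def)
  have cardR: "real (card (R1 \<union> R2)) \<le> (2 - 1 / 2 ^ Suc d) * real (ms g (Suc d))"
  proof -
    define t :: real where "t = 2 ^ d"
    have t1: "1 \<le> t" unfolding t_def by simp
    have kt: "real k = 8 * t" unfolding k_def kk_def t_def by (simp add: power_add)
    have "card (R1 \<union> R2) \<le> N * card R + M" using card_Un_le[of R1 R2] cR1 cR2 by linarith
    then have "real (card (R1 \<union> R2)) \<le> real N * real (card R) + real M" by (metis of_nat_add of_nat_le_iff of_nat_mult)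
    also have "\<dots> \<le> real N * ((2 - 1 / t) * real m) + real M"
      using cR unfolding t_def m_def by (intro add_right_mono mult_left_mono) auto
    also have "\<dots> = 16 * t * real X * real m - 6 * real X * real m + 1"
      unfolding N_def M_def using kt t1 by (simp add: field_simps)
    also have "\<dots> \<le> 16 * t * real X * real m - 4 * real X * real m"
    proof -
      have "1 \<le> real X * real m" using X1 m1 by (metis mult_le_cancel_left1 of_nat_1 of_nat_le_iff of_nat_mult mult.right_neutral order_trans mult_le_mono2 nat_mult_1)
      then show ?thesis by linarith
    qed
    also have "\<dots> = (2 - 1 / 2 ^ Suc d) * real (ms g (Suc d))"
      unfolding msS N_def using kt t1 unfolding t_def by (simp add: field_simps)
    finally show ?thesis .
  qed
  have degS: "\<forall>p\<in>P'. Suc d + 1 \<le> card {S\<in>R1 \<union> R2. p \<in> S}"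
  proof
    fix p assume p: "p \<in> P'"
    obtain S where S: "S \<in> R2" "p \<in> S" "S \<notin> R1" using blkd p by blast
    have "insert S {S\<in>R1. p \<in> S} \<subseteq> {S\<in>R1 \<union> R2. p \<in> S}" using S by auto
    then have "card (insert S {S\<in>R1. p \<in> S}) \<le> card {S\<in>R1 \<union> R2. p \<in> S}"
      using finR1 finR2 by (intro card_mono) auto
    moreover have "card (insert S {S\<in>R1. p \<in> S}) = Suc (card {S\<in>R1. p \<in> S})"
      using S finR1 by simp
    ultimately show "Suc d + 1 \<le> card {S\<in>R1 \<union> R2. p \<in> S}" using deg' p by force
  qed
  show ?case
    apply (rule exI[of _ P'], rule exI[of _ "R1 \<union> R2"])
    using finP' cP' msS finR1 finR2 cardR rects' injP' gir' degS by auto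
qed

lemma copies:
  assumes g3: "3 \<le> g" and finP: "finite P" and finR: "finite R" and rects: "\<forall>S\<in>R. is_open_rect S"
    and injx: "inj_on fst P" and gir: "girth_at_least (incidence_adj P R) g"
    and deg: "\<forall>p\<in>P. \<delta> \<le> card {S\<in>R. p \<in> S}" and cP: "card P = m"
  shows "\<exists>P' R'. finite P' \<and> card P' = N * m \<and> finite R' \<and> card R' \<le> N * card R \<and>
     (\<forall>S\<in>R'. is_open_rect S) \<and> girth_at_least (incidence_adj P' R') g \<and> (\<forall>p\<in>P'. \<delta> \<le> card {S\<in>R'. p \<in> S})"
proof -
  define M where "M = N * m + (g - 1) * (m + 1) ^ (g - 1) + 1"
  have cond: "N * m + 1 * ((g - 1) * (m + 1) ^ (g - 1)) < 1 * M" unfolding M_def by simp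
  obtain P' R1 R2 where "finite P'" "card P' = N * m" "finite R1" "card R1 \<le> N * card R"
    "\<forall>S\<in>R1 \<union> R2. is_open_rect S" and gir': "girth_at_least (incidence_adj P' (R1 \<union> R2)) g"
    and "\<forall>p\<in>P'. \<delta> \<le> card {S\<in>R1. p \<in> S}"
    using step[OF finP finR rects injx gir g3 deg cP _ cond] by blast
  moreover have "girth_at_least (incidence_adj P' R1) g"
    by (rule girth_mono[OF gir']) (auto simp: incidence_adj_def)
  ultimately show ?thesis by (intro exI[of _ P'] exI[of _ R1]) auto
qed

lemma edges_sum:
  assumes "finite P" "finite R"
  shows "incidence_edges P R = (\<Sum>p\<in>P. card {S\<in>R. p \<in> S})"
proof -
  have "{(p, S). p \<in> P \<and> S \<in> R \<and> p \<in> S} = Sigma P (\<lambda>p. {S\<in>R. p \<in> S})" by auto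
  then show ?thesis unfolding incidence_edges_def using assms by simp
qed

definition ra :: "(real \<times> real) set \<Rightarrow> real" where "ra S = fst (rpar S)"
definition rc :: "(real \<times> real) set \<Rightarrow> real" where "rc S = fst (snd (snd (rpar S)))"

lemma rect_x_bounds: "is_open_rect S \<Longrightarrow> z \<in> S \<Longrightarrow> ra S < fst z \<and> fst z < rc S"
proof -
  assume S: "is_open_rect S" and z: "z \<in> S"
  obtain a b c d where r: "rpar S = (a, b, c, d)" by (cases "rpar S") auto
  have "S = open_rect a b c d" using rpar[OF S] r by simp
  then show ?thesis using z r unfolding ra_def rc_def open_rect_def by auto
qed

lemma padding:
  assumes finP: "finite P" and finR: "finite R" and cP: "card P \<le> n" and cR: "card R \<le> n"
    and rects: "\<forall>S\<in>R. is_open_rect S" and gir: "girth_at_least (incidence_adj P R) g"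
  shows "\<exists>P'' R''. finite P'' \<and> card P'' = n \<and> finite R'' \<and> card R'' = n \<and> (\<forall>S\<in>R''. is_open_rect S) \<and>
    girth_at_least (incidence_adj P'' R'') g \<and> incidence_edges P R \<le> incidence_edges P'' R''"
proof -
  define hi where "hi = Max (insert 0 (fst ` P \<union> rc ` R)) + 1"
  define lo where "lo = Min (insert 0 (fst ` P \<union> ra ` R)) - 1"
  have finA: "finite (insert 0 (fst ` P \<union> rc ` R))" "finite (insert 0 (fst ` P \<union> ra ` R))" using finP finR by auto
  have hiP: "\<And>p. p \<in> P \<Longrightarrow> fst p < hi"
  proof -
    fix p assume "p \<in> P" then have "fst p \<le> Max (insert 0 (fst ` P \<union> rc ` R))" by (intro Max_ge[OF finA(1)]) auto
    then show "fst p < hi" unfolding hi_def by simp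
  qed
  have hiR: "\<And>S. S \<in> R \<Longrightarrow> rc S < hi"
  proof -
    fix S assume "S \<in> R" then have "rc S \<le> Max (insert 0 (fst ` P \<union> rc ` R))" by (intro Max_ge[OF finA(1)]) auto
    then show "rc S < hi" unfolding hi_def by simp
  qed
  have loP: "\<And>p. p \<in> P \<Longrightarrow> lo < fst p"
  proof -
    fix p assume "p \<in> P" then have "Min (insert 0 (fst ` P \<union> ra ` R)) \<le> fst p" by (intro Min_le[OF finA(2)]) auto
    then show "lo < fst p" unfolding lo_def by simp
  qed
  have loR: "\<And>S. S \<in> R \<Longrightarrow> lo < ra S"
  proof -
    fix S assume "S \<in> R" then have "Min (insert 0 (fst ` P \<union> ra ` R)) \<le> ra S" by (intro Min_le[OF finA(2)]) auto
    then show "lo < ra S" unfolding lo_def by simp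
  qed
  have "0 \<le> Max (insert 0 (fst ` P \<union> rc ` R))" "Min (insert 0 (fst ` P \<union> ra ` R)) \<le> 0"
    by (intro Max_ge[OF finA(1)] Min_le[OF finA(2)], simp)+
  then have lohi: "lo < hi" unfolding lo_def hi_def by simp
  define Q where "Q = (\<lambda>i::nat. (hi + real i, 0::real)) ` {..<n - card P}"
  define T where "T = (\<lambda>i::nat. open_rect (lo - real i - 1) 0 (lo - real i) 1) ` {..<n - card R}"
  have injQ: "inj_on (\<lambda>i::nat. (hi + real i, 0::real)) {..<n - card P}" by (auto simp: inj_on_def)
  have wT: "\<And>i::nat. (lo - real i - 1/2, 1/2) \<in> open_rect (lo - real i - 1) 0 (lo - real i) 1"
    by (simp add: open_rect_mem)
  have injT: "inj_on (\<lambda>i::nat. open_rect (lo - real i - 1) 0 (lo - real i) 1) {..<n - card R}"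
  proof (rule inj_onI)
    fix i j :: nat assume e: "open_rect (lo - real i - 1) 0 (lo - real i) 1 = open_rect (lo - real j - 1) 0 (lo - real j) 1"
    have "(lo - real i - 1/2, 1/2) \<in> open_rect (lo - real j - 1) 0 (lo - real j) 1" using wT[of i] e by simp
    moreover have "(lo - real j - 1/2, 1/2) \<in> open_rect (lo - real i - 1) 0 (lo - real i) 1" using wT[of j] e by simp
    ultimately have "real i < real j + 1/2" "real j < real i + 1/2" by (auto simp: open_rect_mem)
    then show "i = j" by linarith
  qed
  have QP: "Q \<inter> P = {}" unfolding Q_def using hiP by force
  have TR: "T \<inter> R = {}"
  proof -
    { fix i :: nat assume S: "open_rect (lo - real i - 1) 0 (lo - real i) 1 \<in> R"
      have "ra (open_rect (lo - real i - 1) 0 (lo - real i) 1) < lo - real i - 1/2"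
        using rect_x_bounds[OF _ wT[of i]] rects S by fastforce
      then have False using loR[OF S] by simp }
    then show ?thesis unfolding T_def by blast
  qed
  define P'' where "P'' = P \<union> Q"
  define R'' where "R'' = R \<union> T"
  have finQ: "finite Q" "finite T" unfolding Q_def T_def by auto
  have cP'': "card P'' = n" unfolding P''_def using card_Un_disjoint[OF finP finQ(1)] QP card_image[OF injQ] cP
    unfolding Q_def by (simp add: Int_commute)
  have cR'': "card R'' = n" unfolding R''_def using card_Un_disjoint[OF finR finQ(2)] TR card_image[OF injT] cR
    unfolding T_def by (simp add: Int_commute)
  have rects'': "\<forall>S\<in>R''. is_open_rect S" unfolding R''_def T_def is_open_rect_def using rects is_open_rect_def by auto
  have only: "\<And>q S. q \<in> P'' \<Longrightarrow> S \<in> R'' \<Longrightarrow> q \<in> S \<Longrightarrow> q \<in> P \<and> S \<in> R"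
  proof -
    fix q S assume q: "q \<in> P''" and S: "S \<in> R''" and qS: "q \<in> S"
    show "q \<in> P \<and> S \<in> R"
    proof (cases "S \<in> R")
      case True
      then have "fst q < hi" using rect_x_bounds[OF _ qS] rects hiR by fastforce
      then have "q \<notin> Q" unfolding Q_def by auto
      then show ?thesis using q True unfolding P''_def by auto
    next
      case False
      then obtain i :: nat where Si: "S = open_rect (lo - real i - 1) 0 (lo - real i) 1" using S unfolding R''_def T_def by auto
      then have "fst q < lo" using qS by (cases q) (auto simp: open_rect_mem)
      moreover have "lo \<le> fst q"
      proof (cases "q \<in> P")
        case True then show ?thesis using loP by (simp add: less_imp_le)
      next
        case False
        then obtain i :: nat where "q = (hi + real i, 0)" using q unfolding P''_def Q_def by auto
        then show ?thesis using lohi by simp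
      qed
      ultimately show ?thesis by simp
    qed
  qed
  have "girth_at_least (incidence_adj P'' R'') g"
    by (rule girth_mono[OF gir]) (use only in \<open>auto simp: incidence_adj_def\<close>)
  moreover have "incidence_edges P R \<le> incidence_edges P'' R''"
    unfolding incidence_edges_def
  proof (rule card_mono)
    show "finite {(p, S). p \<in> P'' \<and> S \<in> R'' \<and> p \<in> S}"
      by (rule finite_subset[of _ "P'' \<times> R''"]) (auto simp: P''_def R''_def finP finR finQ)
    show "{(p, S). p \<in> P \<and> S \<in> R \<and> p \<in> S} \<subseteq> {(p, S). p \<in> P'' \<and> S \<in> R'' \<and> p \<in> S}"
      unfolding P''_def R''_def by auto
  qed
  ultimately show ?thesis using cP'' cR'' rects'' finP finR finQ unfolding P''_def R''_def by blast
qed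

lemma ms_ge: "3 \<le> g \<Longrightarrow> 2 ^ d \<le> ms g d"
proof (induction d)
  case 0 then show ?case by simp
next
  case (Suc d)
  have "(2::nat) ^ 1 \<le> 2 ^ (d + 3)" by (rule power_increasing) simp_all
  then have "2 \<le> kk d" unfolding kk_def by simp
  moreover have "1 \<le> (g - 1) * (ms g d + kk d) ^ (g - 1)" using Suc.prems ms_pos[OF Suc.prems, of d] by simp
  ultimately have "2 \<le> Nn g d (ms g d)" unfolding Nn_def by (metis mult_le_mono nat_mult_1_right)
  then have "2 * ms g d \<le> Nn g d (ms g d) * ms g d" by (rule mult_right_mono) simp
  moreover have "2 * 2 ^ d \<le> 2 * ms g d" using Suc by simp
  ultimately have "2 * 2 ^ d \<le> Nn g d (ms g d) * ms g d" by (rule order_trans[rotated])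
  then show ?case by (simp only: ms.simps power_Suc)
qed

lemma ms_bound:
  assumes g3: "3 \<le> g"
  shows "ms g d \<le> 2 ^ (2 ^ ((3 * (g - 1) + 2) * (d + 1)))"
proof (induction d)
  case 0
  show ?case by simp
next
  case (Suc d)
  define G where "G = g - 1"
  define E where "E = 3 * G + 2"
  define X where "X = E * (d + 1)"
  define U :: nat where "U = 2 ^ (2 ^ X)"
  define m where "m = ms g d"
  have mU: "m \<le> U" using Suc.IH unfolding m_def U_def X_def E_def G_def .
  have E8: "8 \<le> E" unfolding E_def G_def using g3 by simp
  have "8 * (d + 1) \<le> E * (d + 1)" using E8 by (rule mult_right_mono) simp
  moreover have "d + 3 \<le> 8 * (d + 1)" by simp
  ultimately have "d + 3 \<le> X" unfolding X_def by (rule order_trans[rotated])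
  then have "d + 3 \<le> 2 ^ X" using less_exp[of X] by linarith
  then have kU: "kk d \<le> U" unfolding kk_def U_def by (intro power_increasing) auto
  have GG: "G \<le> 2 ^ G" using less_exp[of G] by linarith
  have "ms g (Suc d) = kk d * (G * (m + kk d) ^ G) * m" unfolding m_def G_def by (simp add: Nn_def)
  also have "\<dots> \<le> U * (2 ^ G * (2 * U) ^ G) * U"
  proof -
    have "m + kk d \<le> 2 * U" using mU kU by simp
    then have "(m + kk d) ^ G \<le> (2 * U) ^ G" by (rule power_mono) simp
    then have "G * (m + kk d) ^ G \<le> 2 ^ G * (2 * U) ^ G" using GG by (intro mult_mono) simp_all
    then have "kk d * (G * (m + kk d) ^ G) \<le> U * (2 ^ G * (2 * U) ^ G)" by (rule mult_mono[OF kU]) simp_all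
    then show ?thesis by (rule mult_mono[OF _ mU]) simp_all
  qed
  also have "\<dots> = 2 ^ (2 ^ X * (G + 2) + 2 * G)"
  proof -
    have "(2 * U) ^ G = 2 ^ G * 2 ^ (2 ^ X * G)" unfolding U_def by (simp add: power_mult_distrib power_mult)
    then have "U * (2 ^ G * (2 * U) ^ G) * U = 2 ^ (2 ^ X) * 2 ^ G * 2 ^ G * 2 ^ (2 ^ X * G) * 2 ^ (2 ^ X)"
      unfolding U_def by (simp add: algebra_simps)
    also have "\<dots> = 2 ^ (2 ^ X + G + G + 2 ^ X * G + 2 ^ X)" by (simp add: power_add)
    also have "2 ^ X + G + G + 2 ^ X * G + 2 ^ X = 2 ^ X * (G + 2) + 2 * G" by (simp add: algebra_simps)
    finally show ?thesis .
  qed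
  also have "\<dots> \<le> 2 ^ (2 ^ ((3 * (g - 1) + 2) * (Suc d + 1)))"
  proof (rule power_increasing)
    have X1: "1 \<le> (2::nat) ^ X" by simp
    have "2 * G \<le> 2 ^ X * (2 * G)" using X1 by simp
    then have "2 ^ X * (G + 2) + 2 * G \<le> 2 ^ X * (G + 2) + 2 ^ X * (2 * G)" by simp
    also have "\<dots> = 2 ^ X * E" unfolding E_def by (simp add: algebra_simps)
    also have "\<dots> \<le> 2 ^ X * 2 ^ E" using less_exp[of E] by (intro mult_left_mono) simp_all
    also have "\<dots> = 2 ^ ((3 * (g - 1) + 2) * (Suc d + 1))"
    proof -
      have "3 * (g - 1) + 2 = E" unfolding E_def G_def by simp
      then have "(3 * (g - 1) + 2) * (Suc d + 1) = X + E" unfolding X_def by (simp add: algebra_simps)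
      then show ?thesis by (simp add: power_add)
    qed
    finally show "2 ^ X * (G + 2) + 2 * G \<le> 2 ^ ((3 * (g - 1) + 2) * (Suc d + 1))" .
  qed simp
  finally show ?case .
qed

lemma lnln_bound:
  assumes n3: "3 \<le> n" and nb: "real n \<le> 2 ^ (2 ^ Y + 1)"
  shows "ln (ln (real n)) \<le> real Y + 1"
proof -
  have l2: "ln (2::real) \<le> 1" using ln_le_minus_one[of 2] by simp
  have l20: "0 < ln (2::real)" by simp
  have n0: "0 < real n" using n3 by simp
  have "ln (real n) \<le> ln (2 ^ (2 ^ Y + 1))" using nb n0 by (intro ln_mono) auto
  also have "\<dots> = real (2 ^ Y + 1) * ln 2" by (rule ln_realpow)
  also have "\<dots> \<le> real (2 ^ Y + 1)" using l2 by (intro mult_left_le) auto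
  also have "\<dots> \<le> 2 ^ (Y + 1)"
  proof -
    have "(1::nat) \<le> 2 ^ Y" by simp
    then have "2 ^ Y + 1 \<le> (2::nat) ^ (Y + 1)" by simp
    then show ?thesis by (metis of_nat_le_iff of_nat_numeral of_nat_power)
  qed
  finally have L: "ln (real n) \<le> 2 ^ (Y + 1)" .
  have lpos: "0 < ln (real n)" using n3 by (intro ln_gt_zero) simp
  have "ln (ln (real n)) \<le> ln (2 ^ (Y + 1))" using L lpos by (intro ln_mono) auto
  also have "\<dots> = real (Y + 1) * ln 2" by (rule ln_realpow)
  also have "\<dots> \<le> real (Y + 1)" using l2 by (intro mult_left_le) auto
  finally show ?thesis by simp
qed

theorem theorem5p3:
  fixes g :: nat
  assumes "0 < g"
  shows "\<exists>c::real. c > 0 \<and>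
    (\<forall>n::nat. 3 \<le> n \<longrightarrow>
      (\<exists>P :: (real \<times> real) set. \<exists>R :: (real \<times> real) set set.
         finite P \<and> card P = n \<and> finite R \<and> card R = n \<and>
         (\<forall>S\<in>R. is_open_rect S) \<and>
         girth_at_least (incidence_adj P R) g \<and>
         real (incidence_edges P R) \<ge> c * real n * ln (ln (real n))))"
proof -
  define g' where "g' = max g 3"
  have g3: "3 \<le> g'" unfolding g'_def by simp
  have gg: "g \<le> g'" unfolding g'_def by simp
  define E where "E = 3 * (g' - 1) + 2"
  define c :: real where "c = 1 / (4 * (2 * real E + 1))"
  have c0: "c > 0" unfolding c_def by simp
  have main: "\<And>n. 3 \<le> n \<Longrightarrow> \<exists>P :: (real \<times> real) set. \<exists>R :: (real \<times> real) set set.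
         finite P \<and> card P = n \<and> finite R \<and> card R = n \<and>
         (\<forall>S\<in>R. is_open_rect S) \<and>
         girth_at_least (incidence_adj P R) g \<and>
         real (incidence_edges P R) \<ge> c * real n * ln (ln (real n))"
  proof -
    fix n :: nat assume n3: "3 \<le> n"
    have ex: "\<exists>d. n < 2 * ms g' (Suc d)"
    proof
      have "n < 2 ^ Suc n" using less_exp[of "Suc n"] by simp
      also have "\<dots> \<le> ms g' (Suc n)" by (rule ms_ge[OF g3])
      finally show "n < 2 * ms g' (Suc n)" by simp
    qed
    define d where "d = (LEAST d. n < 2 * ms g' (Suc d))"
    have d1: "n < 2 * ms g' (Suc d)" unfolding d_def by (rule LeastI_ex[OF ex])
    have d2: "2 * ms g' d \<le> n"
    proof (cases d)
      case 0 then show ?thesis using n3 by simp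
    next
      case (Suc d0)
      then have "d0 < d" by simp
      then have "\<not> n < 2 * ms g' (Suc d0)" unfolding d_def by (rule not_less_Least)
      then show ?thesis using Suc by simp
    qed
    define m where "m = ms g' d"
    have m1: "1 \<le> m" unfolding m_def by (rule ms_pos[OF g3])
    obtain P R where finP: "finite P" and cP: "card P = m" and finR: "finite R"
      and cR: "real (card R) \<le> (2 - 1 / 2 ^ d) * real m" and rects: "\<forall>S\<in>R. is_open_rect S"
      and injx: "inj_on fst P" and gir: "girth_at_least (incidence_adj P R) g'"
      and deg: "\<forall>p\<in>P. d + 1 \<le> card {S\<in>R. p \<in> S}"
      using level[OF g3, of d] unfolding m_def by blast
    have cR2: "card R \<le> 2 * m"
    proof -
      have "0 \<le> 1 / (2::real) ^ d" by simp
      then have "(2 - 1 / 2 ^ d) \<le> (2::real)" by linarith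
      then have "(2 - 1 / 2 ^ d) * real m \<le> 2 * real m" by (intro mult_right_mono) auto
      then have "real (card R) \<le> real (2 * m)" using cR by simp
      then show ?thesis by linarith
    qed
    define N where "N = n div (2 * m)"
    have N1: "1 \<le> N" unfolding N_def using d2 m1 m_def by (simp add: div_greater_zero_iff Suc_le_eq)
    have N2: "N * (2 * m) \<le> n" unfolding N_def by simp
    have N4: "n \<le> 4 * (N * m)"
    proof -
      have "n = N * (2 * m) + n mod (2 * m)" unfolding N_def by (rule div_mult_mod_eq[symmetric])
      moreover have "n mod (2 * m) < 2 * m" using m1 by simp
      ultimately have "n < N * (2 * m) + 2 * m" by linarith
      moreover have "2 * m \<le> N * (2 * m)" using N1 by simp
      ultimately show ?thesis by linarith
    qed
    obtain P' R' where finP': "finite P'" and cP': "card P' = N * m" and finR': "finite R'"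
      and cR': "card R' \<le> N * card R" and rects': "\<forall>S\<in>R'. is_open_rect S"
      and gir': "girth_at_least (incidence_adj P' R') g'" and deg': "\<forall>p\<in>P'. d + 1 \<le> card {S\<in>R'. p \<in> S}"
      using copies[OF g3 finP finR rects injx gir deg cP, of N] by blast
    have cPn: "card P' \<le> n" using cP' N2 by (metis le_trans mult_le_mono2 mult_2 le_add2 mult.assoc mult.left_commute)
    have cRn: "card R' \<le> n" using cR' cR2 N2 by (meson le_trans mult_le_mono2)
    obtain P'' R'' where fin'': "finite P''" "card P'' = n" "finite R''" "card R'' = n"
      and rects'': "\<forall>S\<in>R''. is_open_rect S" and gir'': "girth_at_least (incidence_adj P'' R'') g'"
      and edg: "incidence_edges P' R' \<le> incidence_edges P'' R''"
      using padding[OF finP' finR' cPn cRn rects' gir'] by blast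
    have "(d + 1) * (N * m) \<le> incidence_edges P' R'"
    proof -
      have "(d + 1) * (N * m) = (\<Sum>p\<in>P'. d + 1)" using cP' by simp
      also have "\<dots> \<le> (\<Sum>p\<in>P'. card {S\<in>R'. p \<in> S})" using deg' by (intro sum_mono) auto
      also have "\<dots> = incidence_edges P' R'" using edges_sum[OF finP' finR'] by simp
      finally show ?thesis .
    qed
    then have edges: "real (d + 1) * real (N * m) \<le> real (incidence_edges P'' R'')"
      using edg by (metis of_nat_le_iff of_nat_mult le_trans)
    have nb: "real n \<le> 2 ^ (2 ^ (E * (d + 2)) + 1)"
    proof -
      have "ms g' (Suc d) \<le> 2 ^ (2 ^ (E * (Suc d + 1)))" unfolding E_def by (rule ms_bound[OF g3])
      then have "n < 2 * 2 ^ (2 ^ (E * (d + 2)))" using d1 by simp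
      then have "n \<le> 2 ^ (2 ^ (E * (d + 2)) + 1)" by simp
      then show ?thesis by (metis of_nat_le_iff of_nat_numeral of_nat_power)
    qed
    have ll: "ln (ln (real n)) \<le> real (E * (d + 2)) + 1" by (rule lnln_bound[OF n3 nb])
    have ll2: "ln (ln (real n)) \<le> (2 * real E + 1) * real (d + 1)"
    proof -
      have "real (E * (d + 2)) + 1 \<le> (2 * real E + 1) * real (d + 1)" by (simp add: algebra_simps)
      then show ?thesis using ll by linarith
    qed
    have "c * real n * ln (ln (real n)) \<le> c * real n * ((2 * real E + 1) * real (d + 1))"
      using ll2 c0 by (intro mult_left_mono) auto
    also have "\<dots> = real n * real (d + 1) / 4" unfolding c_def by (simp add: field_simps)
    also have "\<dots> \<le> real (4 * (N * m)) * real (d + 1) / 4"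
    proof -
      have "real n \<le> real (4 * (N * m))" using N4 by (simp only: of_nat_le_iff)
      then show ?thesis by (intro divide_right_mono mult_right_mono) auto
    qed
    also have "\<dots> = real (d + 1) * real (N * m)" by simp
    also have "\<dots> \<le> real (incidence_edges P'' R'')" by (rule edges)
    finally have "c * real n * ln (ln (real n)) \<le> real (incidence_edges P'' R'')" .
    moreover have "girth_at_least (incidence_adj P'' R'') g" using girth_le[OF gir'' gg] .
    ultimately show "\<exists>P :: (real \<times> real) set. \<exists>R :: (real \<times> real) set set.
         finite P \<and> card P = n \<and> finite R \<and> card R = n \<and>
         (\<forall>S\<in>R. is_open_rect S) \<and>
         girth_at_least (incidence_adj P R) g \<and>
         real (incidence_edges P R) \<ge> c * real n * ln (ln (real n))"
      using fin'' rects'' by blast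
  qed
  show ?thesis using c0 main by blast
qed

end
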